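(* Let $A$ be a parametric timed B\"uchi automaton with parameter bounds $lb,ub$. Then the pk-extrapolation $\alpha_{pk}$ is a finite abstraction over the symbolic semantics $[\![A]\!]$.
   Context: Parameters and guards. $P$ is a finite set of parameters; $E(P)$ is the set of affine expressions $z_0+\sum z_ip_i$ ($z_i\in\mathbb Z$). A parameter valuation is $v:P\to\mathbb Z$; bounds $lb,ub:P\to\mathbb Z$ are fixed; $max_{lb,ub}(e)$ replaces parameters with positive coefficients by $ub(p)$ and those with negative coefficients by $lb(p)$. $X$ is a finite set of clocks with zero clock $x_0$. A guard is a finite conjunction of $x_i-x_j\sim e$ ($e\in E(P)$, $\sim\in\{\le,<\}$), simple if always $x_i=x_0$ or $x_j=x_0$. Clock valuations $\eta:X\to\mathbb R_{\ge0}$, $\eta(x_0)=0$; $\eta+d$, $\eta\langle R\rangle$ as usual. A PTA $M=(L,l_0,X,P,\Delta,Inv)$ with $\Delta\subseteq L\times(\text{simple guards})\times2^X\times L$, $Inv$ simple guards; $[\![M]\!]_v$ has states $(l,\eta)$, initial $(l_0,\mathbf0)$, delays $(l,\eta)\xrightarrow{d}(l,\eta+d)$ when $(v,\eta+d)\models Inv(l)$, action steps $(l,\eta)\xrightarrow{act}(l',\eta\langle R\rangle)$ when $(l,g,R,l')\in\Delta$, $(v,\eta)\models g$, $(v,\eta\langle R\rangle)\models Inv(l')$. A PTBA is $A=(M,F)$, $F\subseteq L$. Constraints $e\sim e'$, finite constraint sets $C$, $[\![C]\!]$, $C\models c$. PDBM $D$ with entries $D_{ij}:x_i-x_j\prec_{ij}e_{ij}$,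 $e_{ij}\in E(P)\cup\{\infty\}$, $e_{ii}=0$; CPDBM $(C,D)$ with $C\models e_{0i}\ge0$, $[\![C,D]\!]=\{(v,\eta):v\in[\![C]\!],\eta\text{ satisfies }D\text{ under }v\}$. With $\le$ read as true and $<$ as false: reset sets entries $rj:=D_{0j}$, $ir:=D_{i0}$; time successor sets entries $i0:=(\infty,<)$, $i\ne0$; guard $g:x_i-x_j\prec e$ with $c:=e_{ij}(\prec_{ij}\Rightarrow\prec)e$ gives $(C,D)[g]=\{(C,D[g])\}$ if $C\models\neg c$, $\{(C,D)\}$ if $C\models c$, else $\{(C\cup\{c\},D),(C\cup\{\neg c\},D[g])\}$ ($D[g]$ sets entry $ij$ to $(e,\prec)$); canonisation $(C,D)_c$ is the set of outcomes of the nondeterministic Floyd–Warshall procedure applying, for $k,i,j=0..|X|$, the guard $x_i-x_j(\prec_{ik}\wedge\prec_{kj})e_{ik}+e_{kj}$. Symbolic semantics $[\![A]\!]$: states $(l,[\![C,D]\!])$; initial states $(l_0,[\![C,D]\!])$ with $(C,D)\in(C_0,E^\uparrow)[Inv(l_0)]$, $E$ all entries $(0,\le)$, $C_0=\{lb(p)\le p,p\le ub(p)\}$; $(l,[\![C,D]\!])\Longrightarrow(l',[\![C'_c,D'_c]\!])$ iff $(l,g,R,l')\in\Delta$, $(C'',D'')\in(C,D)[g]$, $(C''_c,D''_c)\in(C'',D'')_c$, $(C',D')\in(C''_c,D''_c\langle R\rangle^\uparrow)[Inv(l')]$, $(C'_c,D'_c)\in(C',D')_c$. Abstraction. $s\in_vS$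 for concrete $s=(l,\eta)$ and symbolic $S=(l,[\![C,D]\!])$ means $v\in[\![C]\!]$ and $\eta$ satisfies $D$ under $v$. $\preccurlyeq$ is the largest time-abstracting simulation on $[\![M]\!]_v$ (matching action steps by action steps and delays by some delays, preserving the relation). An abstraction over $[\![A]\!]$ is a map $\alpha$ from symbolic states to sets of symbolic states such that (i) $(l',[\![C',D']\!])\in\alpha((l,[\![C,D]\!]))$ implies $l=l'$, $[\![C']\!]\subseteq[\![C]\!]$ and $[\![C',D]\!]\subseteq[\![C',D']\!]$; (ii) for each $v\in[\![C]\!]$ there exist $S_1,S_2$ with $S_2\in\alpha(S_1)$ such that each $s\in_vS_2$ has $s'\in_vS_1$ with $s\preccurlyeq s'$. It is finite if its image is finite. pk-extrapolation: $M(x)$ is the maximum of $max_{lb,ub}(e)$ over expressions $e$ compared with clock $x$ in guards or invariants of $A$. For $(l,[\![C,D]\!])$ with $D_{ij}:x_i-x_j\prec_{ij}e_{ij}$, $\alpha_{pk}(l,[\![C,D]\!])$ is the set of all $(l,[\![C',D']\!])$ such that for each $i,j$ one holds: $D'_{ij}=D_{ij}$ and $(e_{ij}\le M(x_i))\in C'$; $D'_{ij}:x_i-x_j<\infty$ and $(e_{ij}>M(x_i))\in C'$; $D'_{ij}=D_{ij}$ and $(e_{ij}\ge-M(x_j))\in C'$; $D'_{ij}:x_i-x_j<-M(x_j)$ and $(e_{ij}<-M(x_j))\in C'$. *)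

theory Defs
  imports Complex_Main
begin

text \<open>The finite parameter set P is the (finite) type 'p.  An affine expression
  z0 + sum z_i p_i is a pair (z0, coefficient function).\<close>

type_synonym 'p expr = "int \<times> ('p \<Rightarrow> int)"
type_synonym 'p pval = "'p \<Rightarrow> int"

definition const_e :: "int \<Rightarrow> 'p expr" where
  "const_e c = (c, \<lambda>_. 0)"

definition var_e :: "'p \<Rightarrow> 'p expr" where
  "var_e p = (0, \<lambda>q. if q = p then 1 else 0)"

definition add_e :: "'p expr \<Rightarrow> 'p expr \<Rightarrow> 'p expr" where
  "add_e e e' = (fst e + fst e', \<lambda>p. snd e p + snd e' p)"

definition neg_e :: "'p expr \<Rightarrow> 'p expr" where
  "neg_e e = (- fst e, \<lambda>p. - snd e p)"

definition ev :: "'p::finite pval \<Rightarrow> 'p expr \<Rightarrow> int" where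
  "ev v e = fst e + (\<Sum>p\<in>UNIV. snd e p * v p)"

definition max_lu :: "'p::finite pval \<Rightarrow> 'p pval \<Rightarrow> 'p expr \<Rightarrow> int" where
  "max_lu lb ub e = fst e + (\<Sum>p\<in>UNIV. if snd e p > 0 then snd e p * ub p else snd e p * lb p)"

text \<open>Clocks are x_0, ..., x_n (indices 0..n), x_0 is the zero clock.
  An atom (i, j, b, e) is  x_i - x_j <= e  if b, and  x_i - x_j < e  otherwise.\<close>

type_synonym 'p atom = "nat \<times> nat \<times> bool \<times> 'p expr"
type_synonym 'p guard = "'p atom list"
type_synonym clockval = "nat \<Rightarrow> real"

definition simple_guard :: "'p guard \<Rightarrow> bool" where
  "simple_guard g \<longleftrightarrow> (\<forall>(i, j, b, e) \<in> set g. i = 0 \<or> j = 0)"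

definition guard_clocks :: "nat \<Rightarrow> 'p guard \<Rightarrow> bool" where
  "guard_clocks n g \<longleftrightarrow> (\<forall>(i, j, b, e) \<in> set g. i \<le> n \<and> j \<le> n)"

definition sat_bound :: "bool \<Rightarrow> real \<Rightarrow> int \<Rightarrow> bool" where
  "sat_bound b d c = (if b then d \<le> real_of_int c else d < real_of_int c)"

definition sat_guard :: "'p::finite pval \<Rightarrow> clockval \<Rightarrow> 'p guard \<Rightarrow> bool" where
  "sat_guard v \<eta> g \<longleftrightarrow> (\<forall>(i, j, b, e) \<in> set g. sat_bound b (\<eta> i - \<eta> j) (ev v e))"

definition delay :: "clockval \<Rightarrow> real \<Rightarrow> clockval" where
  "delay \<eta> d = (\<lambda>i. if i = 0 then 0 else \<eta> i + d)"

definition reset :: "clockval \<Rightarrow> nat set \<Rightarrow> clockval" where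
  "reset \<eta> R = (\<lambda>i. if i \<in> R then 0 else \<eta> i)"

record ('l, 'p) pta =
  locs :: "'l set"
  init :: 'l
  nclk :: nat
  trans :: "('l \<times> 'p guard \<times> nat set \<times> 'l) set"
  inv :: "'l \<Rightarrow> 'p guard"

text \<open>A PTBA is a PTA together with a set of accepting locations.\<close>
type_synonym ('l, 'p) ptba = "('l, 'p) pta \<times> 'l set"

definition wf_ptba :: "('l, 'p) ptba \<Rightarrow> bool" where
  "wf_ptba A \<longleftrightarrow> (let M = fst A in
     finite (locs M) \<and> init M \<in> locs M \<and> finite (trans M) \<and> snd A \<subseteq> locs M \<and>
     (\<forall>(l, g, R, l') \<in> trans M. l \<in> locs M \<and> l' \<in> locs M \<and> simple_guard g \<and>
         guard_clocks (nclk M) g \<and> R \<subseteq> {0..nclk M}) \<and>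
     (\<forall>l \<in> locs M. simple_guard (inv M l) \<and> guard_clocks (nclk M) (inv M l)))"

section \<open>Concrete semantics [[M]]_v and time-abstracting simulation\<close>

definition delay_step :: "('l, 'p::finite) pta \<Rightarrow> 'p pval \<Rightarrow> 'l \<times> clockval \<Rightarrow> 'l \<times> clockval \<Rightarrow> bool" where
  "delay_step M v s s' \<longleftrightarrow> (\<exists>d::real. d \<ge> 0 \<and> fst s' = fst s \<and> snd s' = delay (snd s) d \<and>
      sat_guard v (snd s') (inv M (fst s)))"

definition act_step :: "('l, 'p::finite) pta \<Rightarrow> 'p pval \<Rightarrow> 'l \<times> clockval \<Rightarrow> 'l \<times> clockval \<Rightarrow> bool" where
  "act_step M v s s' \<longleftrightarrow> (\<exists>g R. (fst s, g, R, fst s') \<in> trans M \<and> sat_guard v (snd s) g \<and>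
      snd s' = reset (snd s) R \<and> sat_guard v (snd s') (inv M (fst s')))"

definition ta_simulation :: "('l, 'p::finite) pta \<Rightarrow> 'p pval \<Rightarrow> (('l \<times> clockval) \<times> ('l \<times> clockval)) set \<Rightarrow> bool" where
  "ta_simulation M v Rel \<longleftrightarrow> (\<forall>s1 s2. (s1, s2) \<in> Rel \<longrightarrow>
      fst s1 = fst s2 \<and>
      (\<forall>s1'. act_step M v s1 s1' \<longrightarrow> (\<exists>s2'. act_step M v s2 s2' \<and> (s1', s2') \<in> Rel)) \<and>
      (\<forall>s1'. delay_step M v s1 s1' \<longrightarrow> (\<exists>s2'. delay_step M v s2 s2' \<and> (s1', s2') \<in> Rel)))"

definition sim :: "('l, 'p::finite) pta \<Rightarrow> 'p pval \<Rightarrow> 'l \<times> clockval \<Rightarrow> 'l \<times> clockval \<Rightarrow> bool" where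
  "sim M v s s' \<longleftrightarrow> (\<exists>Rel. ta_simulation M v Rel \<and> (s, s') \<in> Rel)"

section \<open>Constraints and constrained parametric DBMs\<close>

text \<open>A constraint (e, b, e') is  e <= e'  if b and  e < e'  otherwise.\<close>
type_synonym 'p constr = "'p expr \<times> bool \<times> 'p expr"

definition sat_c :: "'p::finite pval \<Rightarrow> 'p constr \<Rightarrow> bool" where
  "sat_c v c = (case c of (e, b, e') \<Rightarrow> if b then ev v e \<le> ev v e' else ev v e < ev v e')"

definition neg_c :: "'p constr \<Rightarrow> 'p constr" where
  "neg_c c = (case c of (e, b, e') \<Rightarrow> (e', \<not> b, e))"

definition csem :: "'p::finite constr set \<Rightarrow> 'p pval set" where
  "csem C = {v. \<forall>c \<in> C. sat_c v c}"

definition entails :: "'p::finite constr set \<Rightarrow> 'p constr \<Rightarrow> bool" where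
  "entails C c \<longleftrightarrow> (\<forall>v \<in> csem C. sat_c v c)"

text \<open>A PDBM entry: bound (None = infinity) and flag (True = <=, False = <).\<close>
type_synonym 'p bnd = "'p expr option \<times> bool"
type_synonym 'p dbm = "nat \<Rightarrow> nat \<Rightarrow> 'p bnd"

definition sat_bnd :: "'p::finite pval \<Rightarrow> real \<Rightarrow> 'p bnd \<Rightarrow> bool" where
  "sat_bnd v d b = (case fst b of None \<Rightarrow> True | Some e \<Rightarrow> sat_bound (snd b) d (ev v e))"

definition zone :: "nat \<Rightarrow> 'p::finite constr set \<Rightarrow> 'p dbm \<Rightarrow> ('p pval \<times> clockval) set" where
  "zone n C D = {(v, \<eta>). v \<in> csem C \<and> \<eta> 0 = 0 \<and> (\<forall>i. 0 \<le> \<eta> i) \<and>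
      (\<forall>i \<le> n. \<forall>j \<le> n. sat_bnd v (\<eta> i - \<eta> j) (D i j))}"

definition add_bnd :: "'p bnd \<Rightarrow> 'p bnd \<Rightarrow> 'p bnd" where
  "add_bnd b b' = ((case (fst b, fst b') of (Some e, Some e') \<Rightarrow> Some (add_e e e') | _ \<Rightarrow> None),
                   snd b \<and> snd b')"

definition upd_dbm :: "'p dbm \<Rightarrow> nat \<Rightarrow> nat \<Rightarrow> 'p bnd \<Rightarrow> 'p dbm" where
  "upd_dbm D i j b = D(i := (D i)(j := b))"

definition apply_bnd :: "nat \<Rightarrow> nat \<Rightarrow> 'p::finite bnd \<Rightarrow> 'p constr set \<times> 'p dbm \<Rightarrow> ('p constr set \<times> 'p dbm) set" where
  "apply_bnd i j g CD = (case CD of (C, D) \<Rightarrow>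
     (case fst g of
        None \<Rightarrow> {(C, D)}
      | Some e \<Rightarrow>
          (case fst (D i j) of
             None \<Rightarrow> {(C, upd_dbm D i j g)}
           | Some eij \<Rightarrow>
               (let c = (eij, (snd (D i j) \<longrightarrow> snd g), e) in
                if entails C (neg_c c) then {(C, upd_dbm D i j g)}
                else if entails C c then {(C, D)}
                else {(insert c C, D), (insert (neg_c c) C, upd_dbm D i j g)}))))"

definition app_guard :: "'p::finite guard \<Rightarrow> 'p constr set \<times> 'p dbm \<Rightarrow> ('p constr set \<times> 'p dbm) set" where
  "app_guard g CD = foldl (\<lambda>S a. case a of (i, j, b, e) \<Rightarrow> \<Union>x\<in>S. apply_bnd i j (Some e, b) x) {CD} g"

text \<open>Nondeterministic Floyd-Warshall canonisation.\<close>
definition canon :: "nat \<Rightarrow> 'p::finite constr set \<times> 'p dbm \<Rightarrow> ('p constr set \<times> 'p dbm) set" where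
  "canon n CD = foldl (\<lambda>S kij. case kij of (k, i, j) \<Rightarrow>
        \<Union>x\<in>S. apply_bnd i j (add_bnd (snd x i k) (snd x k j)) x)
     {CD} [(k, i, j). k \<leftarrow> [0..<Suc n], i \<leftarrow> [0..<Suc n], j \<leftarrow> [0..<Suc n]]"

definition reset_dbm :: "nat set \<Rightarrow> 'p dbm \<Rightarrow> 'p dbm" where
  "reset_dbm R D = (\<lambda>i j. D (if i \<in> R then 0 else i) (if j \<in> R then 0 else j))"

definition up :: "'p dbm \<Rightarrow> 'p dbm" where
  "up D = (\<lambda>i j. if i \<noteq> 0 \<and> j = 0 then (None, False) else D i j)"

definition E_dbm :: "'p dbm" where
  "E_dbm = (\<lambda>i j. (Some (const_e 0), True))"

definition C0 :: "'p pval \<Rightarrow> 'p pval \<Rightarrow> 'p constr set" where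
  "C0 lb ub = {(const_e (lb p), True, var_e p) | p. True} \<union> {(var_e p, True, const_e (ub p)) | p. True}"

section \<open>Symbolic semantics [[A]] (on representatives (l, C, D))\<close>

type_synonym ('l, 'p) sstate = "'l \<times> 'p constr set \<times> 'p dbm"

definition sym_init :: "('l, 'p::finite) ptba \<Rightarrow> 'p pval \<Rightarrow> 'p pval \<Rightarrow> ('l, 'p) sstate set" where
  "sym_init A lb ub = {(init (fst A), C, D) | C D.
      (C, D) \<in> app_guard (inv (fst A) (init (fst A))) (C0 lb ub, up E_dbm)}"

definition sym_step :: "('l, 'p::finite) ptba \<Rightarrow> ('l, 'p) sstate \<Rightarrow> ('l, 'p) sstate \<Rightarrow> bool" where
  "sym_step A S S' \<longleftrightarrow> (case S of (l, C, D) \<Rightarrow> case S' of (l', C', D') \<Rightarrow>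
     (\<exists>g R C1 D1 C2 D2 C3 D3. (l, g, R, l') \<in> trans (fst A) \<and>
        (C1, D1) \<in> app_guard g (C, D) \<and>
        (C2, D2) \<in> canon (nclk (fst A)) (C1, D1) \<and>
        (C3, D3) \<in> app_guard (inv (fst A) l') (C2, up (reset_dbm R D2)) \<and>
        (C', D') \<in> canon (nclk (fst A)) (C3, D3)))"

definition sym_reach :: "('l, 'p::finite) ptba \<Rightarrow> 'p pval \<Rightarrow> 'p pval \<Rightarrow> ('l, 'p) sstate set" where
  "sym_reach A lb ub = {S'. \<exists>S \<in> sym_init A lb ub. (S, S') \<in> {(X, Y). sym_step A X Y}\<^sup>*}"

definition sem_state :: "nat \<Rightarrow> ('l, 'p::finite) sstate \<Rightarrow> 'l \<times> ('p pval \<times> clockval) set" where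
  "sem_state n S = (case S of (l, C, D) \<Rightarrow> (l, zone n C D))"

definition is_abstraction :: "('l, 'p::finite) ptba \<Rightarrow> 'p pval \<Rightarrow> 'p pval \<Rightarrow>
    (('l, 'p) sstate \<Rightarrow> ('l, 'p) sstate set) \<Rightarrow> bool" where
  "is_abstraction A lb ub \<alpha> \<longleftrightarrow> (let n = nclk (fst A) in
     \<forall>S1 \<in> sym_reach A lb ub. \<forall>S2 \<in> \<alpha> S1.
       (case S1 of (l, C, D) \<Rightarrow> case S2 of (l', C', D') \<Rightarrow>
          l' = l \<and> csem C' \<subseteq> csem C \<and> zone n C' D \<subseteq> zone n C' D' \<and>
          (\<forall>v \<eta>. (v, \<eta>) \<in> zone n C' D' \<longrightarrow>
              (\<exists>\<eta>'. (v, \<eta>') \<in> zone n C D \<and> sim (fst A) v (l', \<eta>) (l, \<eta>')))))"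

definition finite_abstraction :: "('l, 'p::finite) ptba \<Rightarrow> 'p pval \<Rightarrow> 'p pval \<Rightarrow>
    (('l, 'p) sstate \<Rightarrow> ('l, 'p) sstate set) \<Rightarrow> bool" where
  "finite_abstraction A lb ub \<alpha> \<longleftrightarrow>
     finite (sem_state (nclk (fst A)) ` (\<Union>S \<in> sym_reach A lb ub. \<alpha> S))"

section \<open>pk-extrapolation\<close>

text \<open>Expressions compared with clock x_k (k > 0): e for an upper-bound atom
  x_k - x_0 \<prec> e, and -e for a lower-bound atom x_0 - x_k \<prec> e (i.e. x_k \<succ> -e).\<close>
definition all_guards :: "('l, 'p) ptba \<Rightarrow> 'p guard set" where
  "all_guards A = {g. \<exists>l R l'. (l, g, R, l') \<in> trans (fst A)} \<union> inv (fst A) ` locs (fst A)"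

definition cmp_exprs :: "('l, 'p) ptba \<Rightarrow> nat \<Rightarrow> 'p expr set" where
  "cmp_exprs A k = {e. k \<noteq> 0 \<and> (\<exists>g \<in> all_guards A. \<exists>b e0.
      ((k, 0, b, e0) \<in> set g \<and> e = e0) \<or> ((0, k, b, e0) \<in> set g \<and> e = neg_e e0))}"

definition Mx :: "('l, 'p::finite) ptba \<Rightarrow> 'p pval \<Rightarrow> 'p pval \<Rightarrow> nat \<Rightarrow> int" where
  "Mx A lb ub k = (let S = max_lu lb ub ` cmp_exprs A k in if S = {} then 0 else Max S)"

definition pk_ok :: "('l, 'p::finite) ptba \<Rightarrow> 'p pval \<Rightarrow> 'p pval \<Rightarrow>
    'p constr set \<times> 'p dbm \<Rightarrow> 'p constr set \<times> 'p dbm \<Rightarrow> bool" where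
  "pk_ok A lb ub CD CD' \<longleftrightarrow> (case CD of (C, D) \<Rightarrow> case CD' of (C', D') \<Rightarrow>
     (let n = nclk (fst A); M = Mx A lb ub in
      \<exists>cs :: nat \<Rightarrow> nat \<Rightarrow> 'p constr set.
        C' = C \<union> (\<Union>i \<in> {0..n}. \<Union>j \<in> {0..n}. cs i j) \<and>
        (\<forall>i j. \<not> (i \<le> n \<and> j \<le> n) \<longrightarrow> D' i j = D i j) \<and>
        (\<forall>i \<le> n. \<forall>j \<le> n.
          (case fst (D i j) of
             None \<Rightarrow> D' i j = D i j \<and> cs i j = {}
           | Some e \<Rightarrow>
               (D' i j = D i j \<and>
                  cs i j = {(e, True, const_e (M i)), (const_e (- M j), True, e)}) \<or>
               (D' i j = (None, False) \<and> cs i j = {(const_e (M i), False, e)}) \<or>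
               (D' i j = (Some (const_e (- M j)), False) \<and> cs i j = {(e, False, const_e (- M j))})))))"

definition alpha_pk :: "('l, 'p::finite) ptba \<Rightarrow> 'p pval \<Rightarrow> 'p pval \<Rightarrow> ('l, 'p) sstate \<Rightarrow> ('l, 'p) sstate set" where
  "alpha_pk A lb ub S = (case S of (l, C, D) \<Rightarrow> {(l, C', D') | C' D'. pk_ok A lb ub (C, D) (C', D')})"

end

theory Submission
  imports Defs
begin

datatype eb = EInf | EFin int bool

instantiation eb :: linorder
begin
fun less_eq_eb :: "eb \<Rightarrow> eb \<Rightarrow> bool" where
  "less_eq_eb _ EInf = True"
| "less_eq_eb EInf (EFin _ _) = False"
| "less_eq_eb (EFin a s) (EFin b t) = (a < b \<or> (a = b \<and> (s \<longrightarrow> t)))"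
definition less_eb :: "eb \<Rightarrow> eb \<Rightarrow> bool" where
  "less_eb x y = (x \<le> y \<and> \<not> y \<le> x)"
instance
proof
  fix x y z :: eb
  show "(x < y) = (x \<le> y \<and> \<not> y \<le> x)" by (simp add: less_eb_def)
  show "x \<le> x" by (cases x) auto
  show "x \<le> y \<Longrightarrow> y \<le> z \<Longrightarrow> x \<le> z"
    by (cases x; cases y; cases z) auto
  show "x \<le> y \<Longrightarrow> y \<le> x \<Longrightarrow> x = y"
    by (cases x; cases y) auto
  show "x \<le> y \<or> y \<le> x"
    by (cases x; cases y) auto
qed
end

instantiation eb :: ordered_comm_monoid_add
begin
definition zero_eb :: eb where "zero_eb = EFin 0 True"
fun plus_eb :: "eb \<Rightarrow> eb \<Rightarrow> eb" where
  "plus_eb (EFin a s) (EFin b t) = EFin (a + b) (s \<and> t)"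
| "plus_eb _ _ = EInf"
instance
proof
  fix a b c :: eb
  show "a + b + c = a + (b + c)"
    by (cases a; cases b; cases c) auto
  show "a + b = b + a"
    by (cases a; cases b) auto
  show "0 + a = a"
    by (cases a) (auto simp: zero_eb_def)
  show "a \<le> b \<Longrightarrow> c + a \<le> c + b"
    by (cases a; cases b; cases c) auto
qed
end

lemma plus_EInf[simp]: "x + EInf = EInf" "EInf + x = EInf"
  by (cases x; simp)+

fun sat_e :: "eb \<Rightarrow> real \<Rightarrow> bool" where
  "sat_e EInf d = True"
| "sat_e (EFin c s) d = (if s then d \<le> real_of_int c else d < real_of_int c)"

lemma sat_mono: "a \<le> b \<Longrightarrow> sat_e a d \<Longrightarrow> sat_e b d"
  by (cases a; cases b) (auto split: if_splits)

lemma sat_add: "sat_e a d1 \<Longrightarrow> sat_e b d2 \<Longrightarrow> sat_e (a + b) (d1 + d2)"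
  by (cases a; cases b) (auto split: if_splits)

lemma sat_zero: "sat_e a 0 \<longleftrightarrow> 0 \<le> a"
  by (cases a) (auto simp: zero_eb_def)

lemma sat_min: "sat_e (min a b) d \<longleftrightarrow> sat_e a d \<and> sat_e b d"
  by (metis min.absorb_iff2 min.commute min_def nle_le sat_mono)

lemma sat_addE: "sat_e (EFin a s + EFin b t) d \<longleftrightarrow> (if s \<and> t then d \<le> real_of_int (a + b) else d < real_of_int (a+b))"
  by auto

lemma le_zero_fin: "x \<le> 0 \<Longrightarrow> \<exists>c s. x = EFin c s \<and> c \<le> 0"
  by (cases x) (auto simp: zero_eb_def)

lemma min_add_le:
  fixes a b c d e :: eb
  assumes "e \<le> a + c" "e \<le> a + d" "e \<le> b + c" "e \<le> b + d"
  shows "e \<le> min a b + min c d"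
  using assms by (simp add: min_def)

lemma nonneg_add: "0 \<le> (a::eb) \<Longrightarrow> 0 \<le> b \<Longrightarrow> 0 \<le> a + b"
  by (metis add_mono add_0)

lemma le_add_nonneg: "0 \<le> (b::eb) \<Longrightarrow> a \<le> a + b"
  by (metis add_left_mono add_0_right)

definition evb :: "'p::finite pval \<Rightarrow> 'p bnd \<Rightarrow> eb" where
  "evb v b = (case fst b of None \<Rightarrow> EInf | Some e \<Rightarrow> EFin (ev v e) (snd b))"

definition evd :: "'p::finite pval \<Rightarrow> 'p dbm \<Rightarrow> nat \<Rightarrow> nat \<Rightarrow> eb" where
  "evd v D = (\<lambda>i j. evb v (D i j))"

lemma sat_bnd_evb: "sat_bnd v d b = sat_e (evb v b) d"
  by (auto simp: sat_bnd_def evb_def sat_bound_def split: option.splits)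

lemma ev_add: "ev v (add_e e e') = ev v e + ev v e'"
  by (simp add: ev_def add_e_def algebra_simps sum.distrib)

lemma ev_neg: "ev v (neg_e e) = - ev v e"
  by (simp add: ev_def neg_e_def sum_negf)

lemma ev_const[simp]: "ev v (const_e c) = c"
  by (simp add: ev_def const_e_def)

lemma ev_var[simp]: "ev v (var_e p) = v p"
proof -
  have "(\<Sum>q\<in>UNIV. (if q = p then 1 else 0) * v q) = (\<Sum>q\<in>UNIV. (if q = p then v q else 0))"
    by (rule sum.cong) auto
  also have "\<dots> = v p" by (simp add: sum.delta)
  finally have "(\<Sum>q\<in>UNIV. (if q = p then 1 else 0) * v q) = v p" .
  thus ?thesis by (simp add: ev_def var_e_def)
qed

lemma evb_add: "evb v (add_bnd b b') = evb v b + evb v b'"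
  by (cases "fst b"; cases "fst b'") (auto simp: evb_def add_bnd_def ev_add)

lemma csem_mono: "C \<subseteq> C' \<Longrightarrow> csem C' \<subseteq> csem C"
  by (auto simp: csem_def)

lemma apply_bnd_ev:
  assumes "(C', D') \<in> apply_bnd i j g (C, D)" "v \<in> csem C'"
  shows "C \<subseteq> C' \<and> evd v D' = (evd v D)(i := (evd v D i)(j := min (evd v D i j) (evb v g)))"
proof (cases "fst g")
  case None
  then show ?thesis using assms by (auto simp: apply_bnd_def evd_def evb_def fun_eq_iff)
next
  case (Some e)
  note g = this
  show ?thesis
  proof (cases "fst (D i j)")
    case None
    then have "C' = C" "D' = upd_dbm D i j g" using assms g by (auto simp: apply_bnd_def)
    then show ?thesis using None
      by (auto intro!: ext simp: evd_def evb_def upd_dbm_def split: option.splits)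
  next
    case (Some eij)
    let ?c = "(eij, (snd (D i j) \<longrightarrow> snd g), e)"
    have old: "evd v D i j = EFin (ev v eij) (snd (D i j))" using Some by (simp add: evd_def evb_def)
    have new: "evb v g = EFin (ev v e) (snd g)" using g by (simp add: evb_def)
    have setc: "min (evd v D i j) (evb v g) = evb v g" if "sat_c v (neg_c ?c)"
      using that unfolding old new by (auto simp: sat_c_def neg_c_def min_def split: if_splits)
    have keepc: "min (evd v D i j) (evb v g) = evd v D i j" if "sat_c v ?c"
      using that unfolding old new by (auto simp: sat_c_def min_def split: if_splits)
    have A: "apply_bnd i j g (C, D) = (if entails C (neg_c ?c) then {(C, upd_dbm D i j g)}
                else if entails C ?c then {(C, D)}
                else {(insert ?c C, D), (insert (neg_c ?c) C, upd_dbm D i j g)})"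
      using g Some by (simp add: apply_bnd_def Let_def)
    show ?thesis
    proof (cases "entails C (neg_c ?c)")
      case True
      then have "(C', D') = (C, upd_dbm D i j g)" using assms(1) A by simp
      moreover have "sat_c v (neg_c ?c)" using True assms(2) calculation by (auto simp: entails_def)
      ultimately show ?thesis using setc by (auto intro!: ext simp: evd_def upd_dbm_def split: option.splits)
    next
      case F1: False
      show ?thesis
      proof (cases "entails C ?c")
        case True
        then have "(C', D') = (C, D)" using assms(1) A F1 by simp
        moreover have "sat_c v ?c" using True assms(2) calculation by (auto simp: entails_def)
        ultimately show ?thesis using keepc by (auto intro!: ext)
      next
        case False
        then have "(C', D') = (insert ?c C, D) \<or> (C', D') = (insert (neg_c ?c) C, upd_dbm D i j g)"
          using assms(1) A F1 by auto
        then show ?thesis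
        proof
          assume h: "(C', D') = (insert ?c C, D)"
          then have "sat_c v ?c" using assms(2) by (auto simp: csem_def)
          then show ?thesis using h keepc by (auto intro!: ext)
        next
          assume h: "(C', D') = (insert (neg_c ?c) C, upd_dbm D i j g)"
          then have "sat_c v (neg_c ?c)" using assms(2) by (auto simp: csem_def)
          then show ?thesis using h setc by (auto intro!: ext simp: evd_def upd_dbm_def split: option.splits)
        qed
      qed
    qed
  qed
qed

definition gstep :: "'p::finite pval \<Rightarrow> (nat \<Rightarrow> nat \<Rightarrow> eb) \<Rightarrow> 'p atom \<Rightarrow> (nat \<Rightarrow> nat \<Rightarrow> eb)" where
  "gstep v X a = (case a of (i, j, b, e) \<Rightarrow> X(i := (X i)(j := min (X i j) (EFin (ev v e) b))))"

definition fstep :: "(nat \<Rightarrow> nat \<Rightarrow> eb) \<Rightarrow> nat \<times> nat \<times> nat \<Rightarrow> (nat \<Rightarrow> nat \<Rightarrow> eb)" where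
  "fstep X t = (case t of (k, i, j) \<Rightarrow> X(i := (X i)(j := min (X i j) (X i k + X k j))))"

lemma app_guard_gen:
  assumes "(C', D') \<in> foldl (\<lambda>S a. case a of (i, j, b, e) \<Rightarrow> \<Union>x\<in>S. apply_bnd i j (Some e, b) x) S0 g"
    "v \<in> csem C'"
  shows "\<exists>C0 D0. (C0, D0) \<in> S0 \<and> C0 \<subseteq> C' \<and> evd v D' = foldl (gstep v) (evd v D0) g"
  using assms
proof (induction g arbitrary: S0)
  case Nil
  then show ?case by auto
next
  case (Cons a g)
  obtain i j b e where a: "a = (i, j, b, e)" by (cases a) auto
  from Cons.prems Cons.IH obtain C1 D1 where
    1: "(C1, D1) \<in> (\<Union>x\<in>S0. apply_bnd i j (Some e, b) x)" "C1 \<subseteq> C'"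
       "evd v D' = foldl (gstep v) (evd v D1) g"
    by (fastforce simp: a)
  then obtain C0 D0 where 2: "(C0, D0) \<in> S0" "(C1, D1) \<in> apply_bnd i j (Some e, b) (C0, D0)" by auto
  have v1: "v \<in> csem C1" using 1(2) Cons.prems(2) csem_mono by blast
  from apply_bnd_ev[OF 2(2) v1] have "C0 \<subseteq> C1" "evd v D1 = gstep v (evd v D0) a"
    by (auto simp: gstep_def a evb_def)
  then show ?case using 1 2 by (auto simp: a)
qed

lemma app_guard_ev:
  assumes "(C', D') \<in> app_guard g (C, D)" "v \<in> csem C'"
  shows "C \<subseteq> C' \<and> evd v D' = foldl (gstep v) (evd v D) g"
  using app_guard_gen[OF assms[unfolded app_guard_def]] by auto

lemma canon_gen:
  assumes "(C', D') \<in> foldl (\<lambda>S kij. case kij of (k, i, j) \<Rightarrow>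
        \<Union>x\<in>S. apply_bnd i j (add_bnd (snd x i k) (snd x k j)) x) S0 ts"
    "v \<in> csem C'"
  shows "\<exists>C0 D0. (C0, D0) \<in> S0 \<and> C0 \<subseteq> C' \<and> evd v D' = foldl fstep (evd v D0) ts"
  using assms
proof (induction ts arbitrary: S0)
  case Nil
  then show ?case by auto
next
  case (Cons a ts)
  obtain k i j where a: "a = (k, i, j)" by (cases a) auto
  from Cons.prems Cons.IH obtain C1 D1 where
    1: "(C1, D1) \<in> (\<Union>x\<in>S0. apply_bnd i j (add_bnd (snd x i k) (snd x k j)) x)" "C1 \<subseteq> C'"
       "evd v D' = foldl fstep (evd v D1) ts"
    by (fastforce simp: a)
  then obtain C0 D0 where 2: "(C0, D0) \<in> S0" "(C1, D1) \<in> apply_bnd i j (add_bnd (D0 i k) (D0 k j)) (C0, D0)" by auto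
  have v1: "v \<in> csem C1" using 1(2) Cons.prems(2) csem_mono by blast
  from apply_bnd_ev[OF 2(2) v1] have "C0 \<subseteq> C1" "evd v D1 = fstep (evd v D0) a"
    by (auto simp: fstep_def a evb_add evd_def)
  then show ?case using 1 2 by (auto simp: a)
qed

definition fwl :: "nat \<Rightarrow> (nat \<times> nat \<times> nat) list" where
  "fwl n = [(k, i, j). k \<leftarrow> [0..<Suc n], i \<leftarrow> [0..<Suc n], j \<leftarrow> [0..<Suc n]]"

lemma canon_ev:
  assumes "(C', D') \<in> canon n (C, D)" "v \<in> csem C'"
  shows "C \<subseteq> C' \<and> evd v D' = foldl fstep (evd v D) (fwl n)"
  using canon_gen[OF assms[unfolded canon_def]] by (auto simp: fwl_def)


lemma apply_bnd_sub: "(C', D') \<in> apply_bnd i j g (C, D) \<Longrightarrow> C \<subseteq> C'"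
  by (auto simp: apply_bnd_def Let_def split: option.splits if_splits)

lemma app_guard_sub_gen:
  assumes "(C', D') \<in> foldl (\<lambda>S a. case a of (i, j, b, e) \<Rightarrow> \<Union>x\<in>S. apply_bnd i j (Some e, b) x) S0 g"
  shows "\<exists>C0 D0. (C0, D0) \<in> S0 \<and> C0 \<subseteq> C'"
  using assms
proof (induction g arbitrary: S0)
  case Nil
  then show ?case by auto
next
  case (Cons a g)
  obtain i j b e where a: "a = (i, j, b, e)" by (cases a) auto
  from Cons.prems Cons.IH obtain C1 D1 where
    1: "(C1, D1) \<in> (\<Union>x\<in>S0. apply_bnd i j (Some e, b) x)" "C1 \<subseteq> C'"
    by (fastforce simp: a)
  then obtain C0 D0 where 2: "(C0, D0) \<in> S0" "(C1, D1) \<in> apply_bnd i j (Some e, b) (C0, D0)" by auto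
  then show ?case using apply_bnd_sub[OF 2(2)] 1 by blast
qed

lemma app_guard_sub: assumes "(C', D') \<in> app_guard g (C, D)" shows "C \<subseteq> C'"
  using app_guard_sub_gen[OF assms[unfolded app_guard_def]] by auto

lemma canon_sub_gen:
  assumes "(C', D') \<in> foldl (\<lambda>S kij. case kij of (k, i, j) \<Rightarrow>
        \<Union>x\<in>S. apply_bnd i j (add_bnd (snd x i k) (snd x k j)) x) S0 ts"
  shows "\<exists>C0 D0. (C0, D0) \<in> S0 \<and> C0 \<subseteq> C'"
  using assms
proof (induction ts arbitrary: S0)
  case Nil
  then show ?case by auto
next
  case (Cons a ts)
  obtain k i j where a: "a = (k, i, j)" by (cases a) auto
  from Cons.prems Cons.IH obtain C1 D1 where
    1: "(C1, D1) \<in> (\<Union>x\<in>S0. apply_bnd i j (add_bnd (snd x i k) (snd x k j)) x)" "C1 \<subseteq> C'"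
    by (fastforce simp: a)
  then obtain C0 D0 where 2: "(C0, D0) \<in> S0" "(C1, D1) \<in> apply_bnd i j (add_bnd (D0 i k) (D0 k j)) (C0, D0)" by auto
  then show ?case using apply_bnd_sub[OF 2(2)] 1 by blast
qed

lemma canon_sub: assumes "(C', D') \<in> canon n (C, D)" shows "C \<subseteq> C'"
  using canon_sub_gen[OF assms[unfolded canon_def]] by auto

type_synonym mat = "nat \<Rightarrow> nat \<Rightarrow> eb"

definition plist :: "nat \<Rightarrow> nat \<Rightarrow> (nat \<times> nat \<times> nat) list" where
  "plist n k = map (\<lambda>(i, j). (k, i, j)) [(i, j). i \<leftarrow> [0..<Suc n], j \<leftarrow> [0..<Suc n]]"

lemma fwl_concat: "fwl n = concat (map (plist n) [0..<Suc n])"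
  unfolding fwl_def plist_def by (simp add: map_concat comp_def)

lemma foldl_concat: "foldl f a (concat xss) = foldl (foldl f) a xss"
  by (induction xss arbitrary: a) auto

definition pass :: "nat \<Rightarrow> mat \<Rightarrow> nat \<Rightarrow> mat" where
  "pass n X k = foldl fstep X (plist n k)"

definition Xs :: "nat \<Rightarrow> mat \<Rightarrow> nat \<Rightarrow> mat" where
  "Xs n X m = foldl (pass n) X [0..<m]"

lemma fw_Xs: "foldl fstep X (fwl n) = Xs n X (Suc n)"
  unfolding fwl_concat foldl_concat Xs_def pass_def by (simp add: foldl_map)

lemma Xs_Suc: "Xs n X (Suc m) = pass n (Xs n X m) m"
  by (simp add: Xs_def)

lemma fstep_le: "fstep X t \<le> X"
  by (auto simp: fstep_def le_fun_def split: prod.splits)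

lemma foldl_fstep_le: "foldl fstep X ts \<le> X"
proof (induction ts arbitrary: X)
  case Nil then show ?case by simp
next
  case (Cons t ts)
  then show ?case using fstep_le[of X t] by (simp, meson order_trans)
qed

lemma pass_le: "pass n X k \<le> X"
  unfolding pass_def by (rule foldl_fstep_le)

lemma Xs_mono: "m \<le> m' \<Longrightarrow> Xs n X m' \<le> Xs n X m"
proof (induction m' rule: dec_induct)
  case base then show ?case by simp
next
  case (step k)
  have "Xs n X (Suc k) = pass n (Xs n X k) k" by (rule Xs_Suc)
  then show ?case using step.IH pass_le[of n "Xs n X k" k] by (metis order_trans)
qed

lemma pass_gen:
  assumes "0 \<le> X k k"
  shows "foldl fstep X (map (\<lambda>(i, j). (k, i, j)) ps) =
    (\<lambda>i j. if (i, j) \<in> set ps then min (X i j) (X i k + X k j) else X i j)"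
proof (induction ps rule: rev_induct)
  case Nil then show ?case by simp
next
  case (snoc p ps)
  obtain a b where p: "p = (a, b)" by (cases p) auto
  let ?Y = "\<lambda>i j. if (i, j) \<in> set ps then min (X i j) (X i k + X k j) else X i j"
  have rk: "?Y i k = X i k" for i
    using le_add_nonneg[OF assms, of "X i k"] by (auto simp: min_def)
  have ck: "?Y k j = X k j" for j
    using le_add_nonneg[OF assms, of "X k j"] by (auto simp: min_def add.commute)
  have "foldl fstep X (map (\<lambda>(i, j). (k, i, j)) (ps @ [p])) = fstep ?Y (k, a, b)"
    using snoc.IH by (simp add: p)
  also have "\<dots> = ?Y(a := (?Y a)(b := min (?Y a b) (X a k + X k b)))"
    by (simp only: fstep_def rk ck prod.case)
  also have "\<dots> = (\<lambda>i j. if (i, j) \<in> set (ps @ [p]) then min (X i j) (X i k + X k j) else X i j)"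
    by (rule ext)+ (auto simp: p min_def)
  finally show ?case .
qed

lemma pass_formula:
  assumes "0 \<le> X k k"
  shows "pass n X k = (\<lambda>i j. if i \<le> n \<and> j \<le> n then min (X i j) (X i k + X k j) else X i j)"
proof -
  define L where "L = [(i, j). i \<leftarrow> [0..<Suc n], j \<leftarrow> [0..<Suc n]]"
  have 1: "plist n k = map (\<lambda>(i, j). (k, i, j)) L"
    by (simp add: plist_def L_def)
  have 2: "(i, j) \<in> set L \<longleftrightarrow> i \<le> n \<and> j \<le> n" for i j
    unfolding L_def by (auto simp del: upt_Suc simp: less_Suc_eq_le image_iff)
  have "pass n X k = (\<lambda>i j. if (i, j) \<in> set L then min (X i j) (X i k + X k j) else X i j)"
    unfolding pass_def 1 by (rule pass_gen[where X=X and k=k, OF assms])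
  then show ?thesis by (simp only: 2)
qed

lemma pass_00:
  shows "pass n X i 0 0 \<le> X 0 i + X i 0"
proof -
  have e: "[0..<Suc n] = 0 # [Suc 0..<Suc n]" by (rule upt_conv_Cons) simp
  have "\<exists>rest. plist n i = (i, 0, 0) # rest" by (simp add: plist_def e del: upt_Suc)
  then obtain rest where "plist n i = (i, 0, 0) # rest" by blast
  then have "pass n X i = foldl fstep (fstep X (i, 0, 0)) rest" by (simp add: pass_def)
  then have "pass n X i 0 0 \<le> fstep X (i, 0, 0) 0 0" using foldl_fstep_le by (metis le_funD)
  also have "\<dots> \<le> X 0 i + X i 0" by (simp add: fstep_def)
  finally show ?thesis .
qed

definition tri :: "nat \<Rightarrow> mat \<Rightarrow> bool" where
  "tri n X \<longleftrightarrow> (\<forall>i j k. i \<le> n \<longrightarrow> j \<le> n \<longrightarrow> k \<le> n \<longrightarrow> X i j \<le> X i k + X k j) \<and> (\<forall>i \<le> n. 0 \<le> X i i)"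

lemma fw_main:
  assumes "X 0 0 < 0 \<or> ((\<forall>i j k. 1 \<le> i \<longrightarrow> i \<le> n \<longrightarrow> 1 \<le> j \<longrightarrow> j \<le> n \<longrightarrow> 1 \<le> k \<longrightarrow> k \<le> n \<longrightarrow> X i j \<le> X i k + X k j)
      \<and> (\<forall>i. 1 \<le> i \<and> i \<le> n \<longrightarrow> 0 \<le> X i i))"
  shows "foldl fstep X (fwl n) 0 0 < 0 \<or> tri n (foldl fstep X (fwl n))"
proof -
  define Y where "Y = Xs n X (Suc n)"
  have YX: "Y \<le> Xs n X m" if "m \<le> Suc n" for m using Xs_mono[OF that] by (simp add: Y_def)
  have H: "Y 0 0 < 0" if "m \<le> a" "a \<le> n" "Xs n X m 0 a + Xs n X m a 0 < 0" for m a
  proof -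
    have "Y 0 0 \<le> Xs n X (Suc a) 0 0" using YX[of "Suc a"] that by (simp add: le_fun_def)
    also have "\<dots> \<le> Xs n X a 0 a + Xs n X a a 0" using pass_00 by (simp add: Xs_Suc)
    also have "\<dots> \<le> Xs n X m 0 a + Xs n X m a 0"
      using Xs_mono[OF that(1), of n X] by (intro add_mono) (auto simp: le_fun_def)
    finally show ?thesis using that(3) by simp
  qed
  define G where "G m \<longleftrightarrow> Y 0 0 < 0 \<or> ((\<forall>i \<le> n. 0 \<le> Xs n X m i i) \<and>
       (\<forall>i j q. i \<le> n \<longrightarrow> j \<le> n \<longrightarrow> q < m \<longrightarrow> Xs n X m i j \<le> Xs n X m i q + Xs n X m q j) \<and>
       (\<forall>i j. 1 \<le> i \<longrightarrow> i \<le> n \<longrightarrow> 1 \<le> j \<longrightarrow> j \<le> n \<longrightarrow> min (X i j) (Xs n X m i 0 + Xs n X m 0 j) \<le> Xs n X m i j))" for m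
  have "G m" if "m \<le> Suc n" for m
    using that
  proof (induction m)
    case 0
    show ?case
    proof (cases "X 0 0 < 0")
      case True
      then have "Y 0 0 < 0" using YX[of 0] by (simp add: Xs_def le_fun_def) (meson le_less_trans)
      then show ?thesis by (simp add: G_def)
    next
      case False
      then have "0 \<le> X i i" if "i \<le> n" for i using assms that
        by (cases "i = 0") auto
      then show ?thesis by (simp add: G_def Xs_def)
    qed
  next
    case (Suc k)
    then have kn: "k \<le> n" by simp
    have Gk: "G k" using Suc by simp
    show ?case
    proof (cases "Y 0 0 < 0")
      case True then show ?thesis by (simp add: G_def)
    next
      case Yn: False
      then have X00: "\<not> X 0 0 < 0" using YX[of 0] by (simp add: Xs_def le_fun_def) (meson le_less_trans)
      then have sub: "\<And>i j k. 1 \<le> i \<Longrightarrow> i \<le> n \<Longrightarrow> 1 \<le> j \<Longrightarrow> j \<le> n \<Longrightarrow> 1 \<le> k \<Longrightarrow> k \<le> n \<Longrightarrow> X i j \<le> X i k + X k j"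
        and subd: "\<And>i. 1 \<le> i \<Longrightarrow> i \<le> n \<Longrightarrow> 0 \<le> X i i"
        using assms by auto
      define X' where "X' = Xs n X k"
      have diag: "\<forall>i \<le> n. 0 \<le> X' i i" and P: "\<And>i j q. i \<le> n \<Longrightarrow> j \<le> n \<Longrightarrow> q < k \<Longrightarrow> X' i j \<le> X' i q + X' q j"
        and Cm: "\<And>i j. 1 \<le> i \<Longrightarrow> i \<le> n \<Longrightarrow> 1 \<le> j \<Longrightarrow> j \<le> n \<Longrightarrow> min (X i j) (X' i 0 + X' 0 j) \<le> X' i j"
        using Gk Yn by (auto simp: G_def X'_def)
      have kk: "0 \<le> X' k k" using diag kn by simp
      have X'': "Xs n X (Suc k) = (\<lambda>i j. if i \<le> n \<and> j \<le> n then min (X' i j) (X' i k + X' k j) else X' i j)"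
        using pass_formula[where X=X' and k=k, OF kk] by (simp add: Xs_Suc X'_def)
      have Hk: "Y 0 0 < 0" if "k \<le> a" "a \<le> n" "X' 0 a + X' a 0 < 0" for a
        using H[OF that(1,2)] that(3) by (simp add: X'_def)
      have cyc0: "Y 0 0 < 0" if "i \<le> n" "X' i 0 + X' 0 i < 0" for i
      proof (cases "k \<le> i")
        case True then show ?thesis using Hk[of i] that by (simp add: add.commute)
      next
        case False
        then have "X' 0 0 \<le> X' 0 i + X' i 0" using P[of 0 0 i] kn by simp
        also have "\<dots> < 0" using that(2) by (simp add: add.commute)
        finally show ?thesis using diag by (simp add: not_le[symmetric])
      qed
      have nd: "0 \<le> X' i k + X' k i" if "i \<le> n" for i
      proof (rule ccontr)
        assume "\<not> 0 \<le> X' i k + X' k i"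
        then have neg: "X' i k + X' k i < 0" by simp
        have "Y 0 0 < 0"
        proof (cases "i = k")
          case True then show ?thesis using neg nonneg_add[OF kk kk] by simp
        next
          case ik: False
          show ?thesis
          proof (cases "k = 0")
            case True
            then show ?thesis using cyc0[of i] neg that by simp
          next
            case k0: False
            show ?thesis
            proof (cases "i = 0")
              case True
              then show ?thesis using Hk[of k] neg kn by (simp add: add.commute)
            next
              case i0: False
              have ci: "min (X i k) (X' i 0 + X' 0 k) \<le> X' i k" using Cm[of i k] that kn i0 k0 by simp
              have ck: "min (X k i) (X' k 0 + X' 0 i) \<le> X' k i" using Cm[of k i] that kn i0 k0 by simp
              consider "X i k \<le> X' i k" "X k i \<le> X' k i" | "X' i 0 + X' 0 k \<le> X' i k" | "X' k 0 + X' 0 i \<le> X' k i"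
                using ci ck by (auto simp: min_def split: if_splits)
              then show ?thesis
              proof cases
                case 1
                have "0 \<le> X i i" using subd[of i] that i0 by simp
                also have "\<dots> \<le> X i k + X k i" using sub[of i i k] that i0 k0 kn by simp
                also have "\<dots> \<le> X' i k + X' k i" using 1 by (rule add_mono)
                finally show ?thesis using neg by simp
              next
                case 2
                have c: "X' i 0 + (X' 0 k + X' k i) < 0"
                proof -
                  have "X' i 0 + (X' 0 k + X' k i) = (X' i 0 + X' 0 k) + X' k i" by (simp add: add.assoc)
                  also have "\<dots> \<le> X' i k + X' k i" using 2 by (rule add_right_mono)
                  finally show ?thesis using neg by simp
                qed
                show ?thesis
                proof (cases "i < k")
                  case True
                  have "X' 0 k + X' k 0 \<le> X' 0 k + (X' k i + X' i 0)"
                    using P[of k 0 i] True kn by (simp add: add_left_mono)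
                  also have "\<dots> = X' i 0 + (X' 0 k + X' k i)" by (simp add: ac_simps)
                  finally show ?thesis using Hk[of k] kn c by simp
                next
                  case False
                  then have ki: "k < i" using ik by simp
                  have "Xs n X (Suc k) 0 i + Xs n X (Suc k) i 0 \<le> (X' 0 k + X' k i) + X' i 0"
                    using X'' that kn by (intro add_mono) auto
                  also have "\<dots> < 0" using c by (simp add: ac_simps)
                  finally show ?thesis using H[of "Suc k" i] ki that by simp
                qed
              next
                case 3
                have c: "X' i k + (X' k 0 + X' 0 i) < 0"
                proof -
                  have "X' i k + (X' k 0 + X' 0 i) \<le> X' i k + X' k i" using 3 by (rule add_left_mono)
                  then show ?thesis using neg by simp
                qed
                show ?thesis
                proof (cases "i < k")
                  case True
                  have "X' 0 k + X' k 0 \<le> (X' 0 i + X' i k) + X' k 0"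
                    using P[of 0 k i] True kn by (simp add: add_right_mono)
                  also have "\<dots> = X' i k + (X' k 0 + X' 0 i)" by (simp add: ac_simps)
                  finally show ?thesis using Hk[of k] kn c by simp
                next
                  case False
                  then have ki: "k < i" using ik by simp
                  have "Xs n X (Suc k) 0 i + Xs n X (Suc k) i 0 \<le> X' 0 i + (X' i k + X' k 0)"
                    using X'' that kn by (intro add_mono) auto
                  also have "\<dots> < 0" using c by (simp add: ac_simps)
                  finally show ?thesis using H[of "Suc k" i] ki that by simp
                qed
              qed
            qed
          qed
        qed
        then show False using Yn by simp
      qed
      have diag': "\<forall>i \<le> n. 0 \<le> Xs n X (Suc k) i i"
        using diag nd X'' by simp
      have rowk: "Xs n X (Suc k) i k = X' i k" if "i \<le> n" for i
        using X'' that kn le_add_nonneg[OF kk, of "X' i k"] by (simp add: min_def)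
      have colk: "Xs n X (Suc k) k j = X' k j" if "j \<le> n" for j
        using X'' that kn le_add_nonneg[OF kk, of "X' k j"] by (simp add: min_def add.commute)
      have tri': "Xs n X (Suc k) i j \<le> Xs n X (Suc k) i q + Xs n X (Suc k) q j"
        if ij: "i \<le> n" "j \<le> n" "q < Suc k" for i j q
      proof -
        have qn: "q \<le> n" using that kn by simp
        show ?thesis
        proof (cases "q = k")
          case True
          then show ?thesis using rowk[OF ij(1)] colk[OF ij(2)] X'' ij by simp
        next
          case False
          then have qk: "q < k" using that by simp
          let ?e = "min (X' i j) (X' i k + X' k j)"
          have c1: "?e \<le> X' i q + X' q j" using P[OF ij(1,2) qk] by (meson min.coboundedI1)
          have c2: "?e \<le> X' i q + (X' q k + X' k j)"
          proof -
            have "X' i k + X' k j \<le> (X' i q + X' q k) + X' k j" using P[OF ij(1) kn qk] by (simp add: add_right_mono)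
            then show ?thesis by (simp add: add.assoc min.coboundedI2)
          qed
          have c3: "?e \<le> (X' i k + X' k q) + X' q j"
          proof -
            have "X' i k + X' k j \<le> X' i k + (X' k q + X' q j)" using P[OF kn ij(2) qk] by (simp add: add_left_mono)
            then show ?thesis by (simp add: add.assoc min.coboundedI2)
          qed
          have c4: "?e \<le> (X' i k + X' k q) + (X' q k + X' k j)"
          proof -
            have z: "0 \<le> X' k q + X' q k" using P[OF kn kn qk] kk order_trans by blast
            have "X' i k + X' k j \<le> (X' i k + (X' k q + X' q k)) + X' k j"
              using le_add_nonneg[OF z, of "X' i k"] by (simp add: add_right_mono)
            also have "\<dots> = (X' i k + X' k q) + (X' q k + X' k j)" by (simp add: ac_simps)
            finally show ?thesis by (simp add: min.coboundedI2)
          qed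
          have "?e \<le> min (X' i q) (X' i k + X' k q) + min (X' q j) (X' q k + X' k j)"
            by (rule min_add_le[OF c1 c2 c3 c4])
          then show ?thesis using X'' ij qn by simp
        qed
      qed
      have C': "min (X i j) (Xs n X (Suc k) i 0 + Xs n X (Suc k) 0 j) \<le> Xs n X (Suc k) i j"
        if ij: "1 \<le> i" "i \<le> n" "1 \<le> j" "j \<le> n" for i j
      proof -
        let ?Z = "Xs n X (Suc k)"
        have Zle: "?Z \<le> X'" using pass_le[of n X' k] by (simp add: Xs_Suc X'_def)
        have zi0: "?Z i 0 \<le> X' i 0" and z0j: "?Z 0 j \<le> X' 0 j" using Zle by (auto simp: le_fun_def)
        have zij: "?Z i j = min (X' i j) (X' i k + X' k j)" using X'' ij by simp
        show ?thesis
        proof (cases "X' i j \<le> X' i k + X' k j")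
          case True
          then have "?Z i j = X' i j" using zij by (simp add: min_def)
          moreover have "min (X i j) (?Z i 0 + ?Z 0 j) \<le> min (X i j) (X' i 0 + X' 0 j)"
            using zi0 z0j by (intro min.mono) (auto intro: add_mono)
          ultimately show ?thesis using Cm[OF ij] by (metis order_trans)
        next
          case False
          then have zv: "?Z i j = X' i k + X' k j" using zij by (simp add: min_def)
          have zi0': "?Z i 0 \<le> X' i k + X' k 0" using X'' ij kn by simp
          have z0j': "?Z 0 j \<le> X' 0 k + X' k j" using X'' ij kn by simp
          show ?thesis
          proof (cases "k = 0")
            case True
            have "?Z i 0 + ?Z 0 j \<le> X' i 0 + X' 0 j" using zi0 z0j by (rule add_mono)
            then show ?thesis using zv True by (simp add: min.coboundedI2)
          next
            case k0: False
            have ci: "min (X i k) (X' i 0 + X' 0 k) \<le> X' i k" using Cm[of i k] ij kn k0 by simp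
            have ck: "min (X k j) (X' k 0 + X' 0 j) \<le> X' k j" using Cm[of k j] ij kn k0 by simp
            consider "X i k \<le> X' i k" "X k j \<le> X' k j" | "X' i 0 + X' 0 k \<le> X' i k" | "X' k 0 + X' 0 j \<le> X' k j"
              using ci ck by (auto simp: min_def split: if_splits)
            then show ?thesis
            proof cases
              case 1
              have "X i j \<le> X i k + X k j" using sub[of i j k] ij kn k0 by simp
              also have "\<dots> \<le> X' i k + X' k j" using 1 by (rule add_mono)
              finally show ?thesis using zv by (simp add: min.coboundedI1)
            next
              case 2
              have "?Z i 0 + ?Z 0 j \<le> X' i 0 + (X' 0 k + X' k j)" using zi0 z0j' by (rule add_mono)
              also have "\<dots> = (X' i 0 + X' 0 k) + X' k j" by (simp add: add.assoc)
              also have "\<dots> \<le> X' i k + X' k j" using 2 by (rule add_right_mono)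
              finally show ?thesis using zv by (simp add: min.coboundedI2)
            next
              case 3
              have "?Z i 0 + ?Z 0 j \<le> (X' i k + X' k 0) + X' 0 j" using zi0' z0j by (rule add_mono)
              also have "\<dots> = X' i k + (X' k 0 + X' 0 j)" by (simp add: add.assoc)
              also have "\<dots> \<le> X' i k + X' k j" using 3 by (rule add_left_mono)
              finally show ?thesis using zv by (simp add: min.coboundedI2)
            qed
          qed
        qed
      qed
      show ?thesis unfolding G_def using diag' tri' C' by blast
    qed
  qed
  then have "G (Suc n)" by simp
  then show ?thesis unfolding G_def tri_def fw_Xs Y_def[symmetric]
    by (auto simp: less_Suc_eq_le)
qed

definition subc :: "nat \<Rightarrow> mat \<Rightarrow> bool" where
  "subc n X \<longleftrightarrow> (\<forall>i j k. 1 \<le> i \<longrightarrow> i \<le> n \<longrightarrow> 1 \<le> j \<longrightarrow> j \<le> n \<longrightarrow> 1 \<le> k \<longrightarrow> k \<le> n \<longrightarrow> X i j \<le> X i k + X k j)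
      \<and> (\<forall>i. 1 \<le> i \<and> i \<le> n \<longrightarrow> 0 \<le> X i i)"

definition row0 :: "nat \<Rightarrow> mat \<Rightarrow> bool" where
  "row0 n X \<longleftrightarrow> (\<forall>k \<le> n. X 0 k \<le> 0)"

lemma row0_le: "(Y::mat) \<le> X \<Longrightarrow> row0 n X \<Longrightarrow> row0 n Y"
  unfolding row0_def le_fun_def by (meson order_trans)

lemma tri_subc: "tri n X \<Longrightarrow> subc n X"
  by (auto simp: tri_def subc_def)

lemma gstep_le: "gstep v X a \<le> X"
  by (auto simp: gstep_def le_fun_def split: prod.splits)

lemma foldl_gstep_le: "foldl (gstep v) X g \<le> X"
proof (induction g arbitrary: X)
  case Nil then show ?case by simp
next
  case (Cons a g)
  then show ?case using gstep_le[of v X a] by (simp, meson order_trans)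
qed

lemma foldl_gstep_keep:
  assumes "simple_guard g" "1 \<le> i" "1 \<le> j"
  shows "foldl (gstep v) X g i j = X i j"
  using assms
proof (induction g arbitrary: X)
  case Nil then show ?case by simp
next
  case (Cons a g)
  obtain a1 a2 b e where a: "a = (a1, a2, b, e)" by (cases a) auto
  have sg: "simple_guard g" "a1 = 0 \<or> a2 = 0" using Cons.prems by (auto simp: simple_guard_def a)
  have "foldl (gstep v) X (a # g) i j = gstep v X a i j" using Cons.IH[OF sg(1) Cons.prems(2,3)] by simp
  also have "\<dots> = X i j" using sg(2) Cons.prems(2,3) by (auto simp: gstep_def a)
  finally show ?case .
qed

lemma le_matD: "(Y::mat) \<le> X \<Longrightarrow> Y i j \<le> X i j" by (simp add: le_fun_def)

lemma guard_pres:
  assumes "simple_guard g" "Y = foldl (gstep v) X g"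
  shows "row0 n X \<Longrightarrow> row0 n Y" and "X 0 0 < 0 \<Longrightarrow> Y 0 0 < 0" and "subc n X \<Longrightarrow> subc n Y"
proof -
  have le: "Y i j \<le> X i j" for i j using foldl_gstep_le assms(2) le_matD by metis
  show "row0 n X \<Longrightarrow> row0 n Y" using le unfolding row0_def by (meson order_trans)
  show "X 0 0 < 0 \<Longrightarrow> Y 0 0 < 0" using le by (meson le_less_trans)
  have k: "1 \<le> i \<Longrightarrow> 1 \<le> j \<Longrightarrow> Y i j = X i j" for i j using foldl_gstep_keep[OF assms(1)] assms(2) by simp
  show "subc n X \<Longrightarrow> subc n Y" unfolding subc_def using k by simp
qed

definition upr :: "nat set \<Rightarrow> mat \<Rightarrow> mat" where
  "upr R X = (\<lambda>i j. if i \<noteq> 0 \<and> j = 0 then EInf else X (if i \<in> R then 0 else i) (if j \<in> R then 0 else j))"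

lemma evd_up_reset: "evd v (up (reset_dbm R D)) = upr R (evd v D)"
  by (auto intro!: ext simp: evd_def up_def reset_dbm_def upr_def evb_def)

lemma upr_tri:
  assumes "tri n X" "R \<subseteq> {0..n}"
  shows "tri n (upr R X)"
proof -
  let ?r = "\<lambda>i. if i \<in> R then 0 else i"
  have rn: "i \<le> n \<Longrightarrow> ?r i \<le> n" for i by auto
  have t: "X (?r i) (?r j) \<le> X (?r i) (?r k) + X (?r k) (?r j)" if "i \<le> n" "j \<le> n" "k \<le> n" for i j k
    using assms(1) rn that unfolding tri_def by blast
  have "upr R X i j \<le> upr R X i k + upr R X k j" if "i \<le> n" "j \<le> n" "k \<le> n" for i j k
    using t[OF that] by (cases "k = 0"; auto simp: upr_def)
  moreover have "0 \<le> upr R X i i" if "i \<le> n" for i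
    using assms(1) rn[OF that] by (auto simp: upr_def tri_def)
  ultimately show ?thesis by (simp add: tri_def)
qed

lemma upr_00: "upr R X 0 0 = X 0 0" by (simp add: upr_def)

lemma upr_row0: "row0 n X \<Longrightarrow> R \<subseteq> {0..n} \<Longrightarrow> row0 n (upr R X)"
  by (auto simp: row0_def upr_def)

definition Wst :: "('l, 'p::finite) ptba \<Rightarrow> 'p pval \<Rightarrow> 'p pval \<Rightarrow> ('l, 'p) sstate \<Rightarrow> bool" where
  "Wst A lb ub S = (case S of (l, C, D) \<Rightarrow> l \<in> locs (fst A) \<and> C0 lb ub \<subseteq> C \<and>
     (\<forall>v \<in> csem C. row0 (nclk (fst A)) (evd v D) \<and> (evd v D 0 0 < 0 \<or> subc (nclk (fst A)) (evd v D))))"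

definition Cst :: "('l, 'p::finite) ptba \<Rightarrow> ('l, 'p) sstate \<Rightarrow> bool" where
  "Cst A S = (case S of (l, C, D) \<Rightarrow> (\<forall>v \<in> csem C. evd v D 0 0 < 0 \<or> tri (nclk (fst A)) (evd v D)))"

lemma wf_trans:
  assumes "wf_ptba A" "(l, g, R, l') \<in> trans (fst A)"
  shows "l \<in> locs (fst A)" "l' \<in> locs (fst A)" "simple_guard g" "guard_clocks (nclk (fst A)) g" "R \<subseteq> {0..nclk (fst A)}"
  using assms by (auto simp: wf_ptba_def Let_def)

lemma wf_inv:
  assumes "wf_ptba A" "l \<in> locs (fst A)"
  shows "simple_guard (inv (fst A) l)" "guard_clocks (nclk (fst A)) (inv (fst A) l)"
  using assms by (auto simp: wf_ptba_def Let_def)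

lemma fw_le: "foldl fstep X (fwl n) \<le> X" by (rule foldl_fstep_le)

lemma step_inv:
  assumes wf: "wf_ptba A" and W: "Wst A lb ub (l, C, D)" and st: "sym_step A (l, C, D) (l', C', D')"
  shows "Wst A lb ub (l', C', D') \<and> Cst A (l', C', D')"
proof -
  let ?n = "nclk (fst A)"
  from st obtain g R C1 D1 C2 D2 C3 D3 where
    tr: "(l, g, R, l') \<in> trans (fst A)" and
    s1: "(C1, D1) \<in> app_guard g (C, D)" and
    s2: "(C2, D2) \<in> canon ?n (C1, D1)" and
    s3: "(C3, D3) \<in> app_guard (inv (fst A) l') (C2, up (reset_dbm R D2))" and
    s4: "(C', D') \<in> canon ?n (C3, D3)"
    by (auto simp: sym_step_def)
  have l'l: "l' \<in> locs (fst A)" and sg: "simple_guard g" and Rn: "R \<subseteq> {0..?n}"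
    using wf_trans[OF wf tr] by auto
  have si: "simple_guard (inv (fst A) l')" using wf_inv[OF wf l'l] by simp
  have c1: "C \<subseteq> C1" using app_guard_sub[OF s1] .
  have c2: "C1 \<subseteq> C2" using canon_sub[OF s2] .
  have c3: "C2 \<subseteq> C3" using app_guard_sub[OF s3] .
  have c4: "C3 \<subseteq> C'" using canon_sub[OF s4] .
  have X: "row0 ?n (evd v D') \<and> (evd v D' 0 0 < 0 \<or> tri ?n (evd v D'))" if v: "v \<in> csem C'" for v
  proof -
    have v3: "v \<in> csem C3" and v2: "v \<in> csem C2" and v1: "v \<in> csem C1" and v0: "v \<in> csem C"
    proof -
      show "v \<in> csem C3" using v csem_mono[OF c4] by blast
      then show "v \<in> csem C2" using csem_mono[OF c3] by blast
      then show "v \<in> csem C1" using csem_mono[OF c2] by blast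
      then show "v \<in> csem C" using csem_mono[OF c1] by blast
    qed
    define X0 where "X0 = evd v D"
    define X1 where "X1 = foldl (gstep v) X0 g"
    define X2 where "X2 = foldl fstep X1 (fwl ?n)"
    define X3 where "X3 = foldl (gstep v) (upr R X2) (inv (fst A) l')"
    have e1: "evd v D1 = X1" using app_guard_ev[OF s1 v1] by (simp add: X1_def X0_def)
    have e2: "evd v D2 = X2" using canon_ev[OF s2 v2] e1 by (simp add: X2_def)
    have e3: "evd v D3 = X3" using app_guard_ev[OF s3 v3] e2 by (simp add: X3_def evd_up_reset)
    have e4: "evd v D' = foldl fstep X3 (fwl ?n)" using canon_ev[OF s4 v] e3 by simp
    have W0: "row0 ?n X0" "X0 0 0 < 0 \<or> subc ?n X0" using W v0 by (auto simp: Wst_def X0_def)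
    have W1: "row0 ?n X1" "X1 0 0 < 0 \<or> subc ?n X1"
      using guard_pres[OF sg X1_def] W0 by auto
    have "X1 0 0 < 0 \<or> ((\<forall>i j k. 1 \<le> i \<longrightarrow> i \<le> ?n \<longrightarrow> 1 \<le> j \<longrightarrow> j \<le> ?n \<longrightarrow> 1 \<le> k \<longrightarrow> k \<le> ?n \<longrightarrow> X1 i j \<le> X1 i k + X1 k j)
      \<and> (\<forall>i. 1 \<le> i \<and> i \<le> ?n \<longrightarrow> 0 \<le> X1 i i))" using W1(2) by (simp add: subc_def)
    from fw_main[OF this] have W2: "X2 0 0 < 0 \<or> tri ?n X2" by (simp add: X2_def)
    have r2: "row0 ?n X2" using row0_le[OF fw_le W1(1)] by (simp add: X2_def)
    have T: "row0 ?n (upr R X2)" "upr R X2 0 0 < 0 \<or> subc ?n (upr R X2)"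
    proof -
      show "row0 ?n (upr R X2)" using upr_row0[OF r2 Rn] .
      show "upr R X2 0 0 < 0 \<or> subc ?n (upr R X2)"
        using W2 upr_tri[OF _ Rn, of X2] upr_00[of R X2] tri_subc by metis
    qed
    have W3: "row0 ?n X3" "X3 0 0 < 0 \<or> subc ?n X3"
      using guard_pres[OF si X3_def] T by auto
    have "X3 0 0 < 0 \<or> ((\<forall>i j k. 1 \<le> i \<longrightarrow> i \<le> ?n \<longrightarrow> 1 \<le> j \<longrightarrow> j \<le> ?n \<longrightarrow> 1 \<le> k \<longrightarrow> k \<le> ?n \<longrightarrow> X3 i j \<le> X3 i k + X3 k j)
      \<and> (\<forall>i. 1 \<le> i \<and> i \<le> ?n \<longrightarrow> 0 \<le> X3 i i))" using W3(2) by (simp add: subc_def)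
    from fw_main[OF this] have W4: "evd v D' 0 0 < 0 \<or> tri ?n (evd v D')" by (simp add: e4)
    have r4: "row0 ?n (evd v D')" using row0_le[OF fw_le W3(1)] by (simp add: e4)
    show ?thesis using W4 r4 by simp
  qed
  have "C0 lb ub \<subseteq> C" using W by (simp add: Wst_def)
  then have "C0 lb ub \<subseteq> C'" using c1 c2 c3 c4 by blast
  then show ?thesis using X l'l tri_subc by (auto simp: Wst_def Cst_def)
qed

lemma evd_upE: "evd v (up E_dbm) = (\<lambda>i j. if i \<noteq> 0 \<and> j = 0 then EInf else 0)"
  by (auto intro!: ext simp: evd_def up_def E_dbm_def evb_def zero_eb_def)

lemma init_inv:
  assumes wf: "wf_ptba A" and S: "S \<in> sym_init A lb ub"
  shows "Wst A lb ub S"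
proof -
  let ?n = "nclk (fst A)"
  let ?l0 = "init (fst A)"
  obtain C D where SD: "S = (?l0, C, D)" "(C, D) \<in> app_guard (inv (fst A) ?l0) (C0 lb ub, up E_dbm)"
    using S by (auto simp: sym_init_def)
  have l0: "?l0 \<in> locs (fst A)" using wf by (auto simp: wf_ptba_def Let_def)
  have si: "simple_guard (inv (fst A) ?l0)" using wf_inv[OF wf l0] by simp
  have c: "C0 lb ub \<subseteq> C" using app_guard_sub[OF SD(2)] .
  have "row0 ?n (evd v D) \<and> subc ?n (evd v D)" if v: "v \<in> csem C" for v
  proof -
    define X where "X = foldl (gstep v) (evd v (up E_dbm)) (inv (fst A) ?l0)"
    have e: "evd v D = X" using app_guard_ev[OF SD(2) v] by (simp add: X_def)
    have "row0 ?n (evd v (up E_dbm))" "subc ?n (evd v (up E_dbm))"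
      by (auto simp: evd_upE row0_def subc_def)
    then show ?thesis using guard_pres[OF si X_def] e by auto
  qed
  then show ?thesis using SD l0 c by (auto simp: Wst_def)
qed

lemma reach_inv:
  assumes wf: "wf_ptba A" and S: "S \<in> sym_reach A lb ub"
  shows "Wst A lb ub S \<and> (S \<in> sym_init A lb ub \<or> Cst A S)"
proof -
  from S obtain S0 where S0: "S0 \<in> sym_init A lb ub" "(S0, S) \<in> {(X, Y). sym_step A X Y}\<^sup>*"
    by (auto simp: sym_reach_def)
  from S0(2) show ?thesis
  proof (induction rule: rtrancl_induct)
    case base
    then show ?case using init_inv[OF wf S0(1)] S0(1) by simp
  next
    case (step Y Z)
    obtain l C D where Y: "Y = (l, C, D)" by (cases Y) auto
    obtain l' C' D' where Z: "Z = (l', C', D')" by (cases Z) auto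
    show ?case using step_inv[OF wf, of lb ub l C D l' C' D'] step Y Z by auto
  qed
qed

lemma box:
  assumes "v \<in> csem (C0 lb ub)" shows "lb p \<le> v p \<and> v p \<le> ub p"
proof -
  have "(const_e (lb p), True, var_e p) \<in> C0 lb ub" "(var_e p, True, const_e (ub p)) \<in> C0 lb ub"
    by (auto simp: C0_def)
  then have "sat_c v (const_e (lb p), True, var_e p)" "sat_c v (var_e p, True, const_e (ub p))"
    using assms by (auto simp: csem_def)
  then show ?thesis by (simp add: sat_c_def)
qed

lemma ev_le_max:
  assumes "\<And>p. lb p \<le> v p \<and> v p \<le> ub p"
  shows "ev v e \<le> max_lu lb ub e"
proof -
  have "snd e p * v p \<le> (if snd e p > 0 then snd e p * ub p else snd e p * lb p)" for p
    using assms[of p] by (auto simp: mult_left_mono mult_left_mono_neg)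
  then show ?thesis unfolding ev_def max_lu_def by (intro add_left_mono sum_mono) auto
qed

lemma all_guards_fin:
  assumes "wf_ptba A" shows "finite (all_guards A)"
proof -
  have "{g. \<exists>l R l'. (l, g, R, l') \<in> trans (fst A)} = (\<lambda>(l, g, R, l'). g) ` trans (fst A)"
    by force
  then show ?thesis using assms by (auto simp: all_guards_def wf_ptba_def Let_def)
qed

lemma cmp_fin:
  assumes "wf_ptba A" shows "finite (cmp_exprs A k)"
proof -
  have "cmp_exprs A k \<subseteq> (\<Union>g \<in> all_guards A. (\<lambda>(i, j, b, e). e) ` set g \<union> (\<lambda>(i, j, b, e). neg_e e) ` set g)"
    by (force simp: cmp_exprs_def)
  moreover have "finite (\<Union>g \<in> all_guards A. (\<lambda>(i, j, b, e). e) ` set g \<union> (\<lambda>(i, j, b, e). neg_e e) ` set g)"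
    using all_guards_fin[OF assms] by auto
  ultimately show ?thesis by (rule finite_subset)
qed

lemma Mx_ge:
  assumes "wf_ptba A" "e \<in> cmp_exprs A k" "v \<in> csem (C0 lb ub)"
  shows "ev v e \<le> Mx A lb ub k"
proof -
  have "ev v e \<le> max_lu lb ub e" using ev_le_max box[OF assms(3)] by blast
  also have "\<dots> \<le> Max (max_lu lb ub ` cmp_exprs A k)"
    using cmp_fin[OF assms(1)] assms(2) by (intro Max_ge) auto
  finally show ?thesis using assms(2) by (auto simp: Mx_def Let_def)
qed

lemma Mx0: "Mx A lb ub 0 = 0"
  by (simp add: Mx_def cmp_exprs_def)

lemma M_upper:
  assumes "wf_ptba A" "g \<in> all_guards A" "(k, 0, b, e) \<in> set g" "k \<noteq> 0" "v \<in> csem (C0 lb ub)"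
  shows "ev v e \<le> Mx A lb ub k"
proof -
  have "e \<in> cmp_exprs A k" unfolding cmp_exprs_def mem_Collect_eq using assms(2,3,4) by blast
  then show ?thesis using Mx_ge assms by blast
qed

lemma M_lower:
  assumes "wf_ptba A" "g \<in> all_guards A" "(0, k, b, e) \<in> set g" "k \<noteq> 0" "v \<in> csem (C0 lb ub)"
  shows "- ev v e \<le> Mx A lb ub k"
proof -
  have "neg_e e \<in> cmp_exprs A k" unfolding cmp_exprs_def mem_Collect_eq using assms(2,3,4) by blast
  then show ?thesis using Mx_ge[OF assms(1) _ assms(5)] ev_neg by metis
qed

definition ent_ok :: "int \<Rightarrow> int \<Rightarrow> eb \<Rightarrow> eb \<Rightarrow> bool" where
  "ent_ok Mi Mj x x' \<longleftrightarrow> (x = EInf \<and> x' = EInf) \<or> (\<exists>c s. x = EFin c s \<and>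
     ((x' = x \<and> c \<le> Mi \<and> - Mj \<le> c) \<or> (x' = EInf \<and> Mi < c) \<or> (x' = EFin (- Mj) False \<and> c < - Mj)))"

lemma pk_entry:
  assumes "pk_ok A lb ub (C, D) (C', D')" "v \<in> csem C'"
  shows "C \<subseteq> C'" and "\<And>i j. i \<le> nclk (fst A) \<Longrightarrow> j \<le> nclk (fst A) \<Longrightarrow>
     ent_ok (Mx A lb ub i) (Mx A lb ub j) (evd v D i j) (evd v D' i j)"
    and "\<And>i j. \<not> (i \<le> nclk (fst A) \<and> j \<le> nclk (fst A)) \<Longrightarrow> D' i j = D i j"
proof -
  let ?n = "nclk (fst A)" and ?M = "Mx A lb ub"
  obtain cs where cs: "C' = C \<union> (\<Union>i \<in> {0..?n}. \<Union>j \<in> {0..?n}. cs i j)"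
    "\<forall>i j. \<not> (i \<le> ?n \<and> j \<le> ?n) \<longrightarrow> D' i j = D i j"
    "\<forall>i \<le> ?n. \<forall>j \<le> ?n. (case fst (D i j) of
             None \<Rightarrow> D' i j = D i j \<and> cs i j = {}
           | Some e \<Rightarrow>
               (D' i j = D i j \<and>
                  cs i j = {(e, True, const_e (?M i)), (const_e (- ?M j), True, e)}) \<or>
               (D' i j = (None, False) \<and> cs i j = {(const_e (?M i), False, e)}) \<or>
               (D' i j = (Some (const_e (- ?M j)), False) \<and> cs i j = {(e, False, const_e (- ?M j))}))"
    using assms(1) unfolding pk_ok_def Let_def by auto
  show "C \<subseteq> C'" using cs(1) by auto
  show "\<And>i j. \<not> (i \<le> ?n \<and> j \<le> ?n) \<Longrightarrow> D' i j = D i j" using cs(2) by auto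
  fix i j assume ij: "i \<le> ?n" "j \<le> ?n"
  have sub: "cs i j \<subseteq> C'" using cs(1) ij by auto
  have sat: "\<And>c. c \<in> cs i j \<Longrightarrow> sat_c v c" using sub assms(2) by (auto simp: csem_def)
  show "ent_ok (?M i) (?M j) (evd v D i j) (evd v D' i j)"
  proof (cases "fst (D i j)")
    case None
    then have "D' i j = D i j" using cs(3)[rule_format, OF ij] by simp
    then show ?thesis using None by (auto simp: ent_ok_def evd_def evb_def)
  next
    case (Some e)
    then have o: "(D' i j = D i j \<and> cs i j = {(e, True, const_e (?M i)), (const_e (- ?M j), True, e)}) \<or>
               (D' i j = (None, False) \<and> cs i j = {(const_e (?M i), False, e)}) \<or>
               (D' i j = (Some (const_e (- ?M j)), False) \<and> cs i j = {(e, False, const_e (- ?M j))})"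
      using cs(3)[rule_format, OF ij] by simp
    have x: "evd v D i j = EFin (ev v e) (snd (D i j))" using Some by (simp add: evd_def evb_def)
    from o show ?thesis
    proof (elim disjE conjE)
      assume h: "D' i j = D i j" "cs i j = {(e, True, const_e (?M i)), (const_e (- ?M j), True, e)}"
      have "sat_c v (e, True, const_e (?M i))" "sat_c v (const_e (- ?M j), True, e)"
        using sat h(2) by auto
      then have "ev v e \<le> ?M i" "- ?M j \<le> ev v e" by (simp_all add: sat_c_def)
      moreover have "evd v D' i j = evd v D i j" using h(1) by (simp add: evd_def)
      ultimately show ?thesis using x by (simp add: ent_ok_def)
    next
      assume h: "D' i j = (None, False)" "cs i j = {(const_e (?M i), False, e)}"
      have "sat_c v (const_e (?M i), False, e)" using sat h(2) by auto
      then have "?M i < ev v e" by (simp add: sat_c_def)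
      moreover have "evd v D' i j = EInf" using h(1) by (simp add: evd_def evb_def)
      ultimately show ?thesis using x by (simp add: ent_ok_def)
    next
      assume h: "D' i j = (Some (const_e (- ?M j)), False)" "cs i j = {(e, False, const_e (- ?M j))}"
      have "sat_c v (e, False, const_e (- ?M j))" using sat h(2) by auto
      then have "ev v e < - ?M j" by (simp add: sat_c_def)
      moreover have "evd v D' i j = EFin (- ?M j) False" using h(1) by (simp add: evd_def evb_def)
      ultimately show ?thesis using x by (simp add: ent_ok_def)
    qed
  qed
qed

definition Rel :: "('l, 'p::finite) ptba \<Rightarrow> 'p pval \<Rightarrow> 'p pval \<Rightarrow> (('l \<times> clockval) \<times> ('l \<times> clockval)) set" where
  "Rel A lb ub = {((l, \<eta>), (l', \<eta>')). l = l' \<and> l \<in> locs (fst A) \<and> \<eta> 0 = 0 \<and> \<eta>' 0 = 0 \<and>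
     (\<forall>i. 1 \<le> i \<and> i \<le> nclk (fst A) \<longrightarrow> \<eta> i = \<eta>' i \<or>
        (real_of_int (Mx A lb ub i) < \<eta> i \<and> real_of_int (Mx A lb ub i) < \<eta>' i))}"

lemma guard_equiv:
  assumes wf: "wf_ptba A" and v: "v \<in> csem (C0 lb ub)" and g: "g \<in> all_guards A"
    and gc: "guard_clocks (nclk (fst A)) g" and sg: "simple_guard g"
    and z: "\<eta> 0 = 0" "\<eta>' 0 = 0"
    and r: "\<forall>i. 1 \<le> i \<and> i \<le> nclk (fst A) \<longrightarrow> \<eta> i = \<eta>' i \<or>
        (real_of_int (Mx A lb ub i) < \<eta> i \<and> real_of_int (Mx A lb ub i) < \<eta>' i)"
  shows "sat_guard v \<eta> g \<longleftrightarrow> sat_guard v \<eta>' g"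
proof -
  have "sat_bound b (\<eta> i - \<eta> j) (ev v e) \<longleftrightarrow> sat_bound b (\<eta>' i - \<eta>' j) (ev v e)"
    if a: "(i, j, b, e) \<in> set g" for i j b e
  proof -
    have ij: "i = 0 \<or> j = 0" "i \<le> nclk (fst A)" "j \<le> nclk (fst A)"
      using a sg gc by (auto simp: simple_guard_def guard_clocks_def)
    show ?thesis
    proof (cases "i = 0")
      case i0: True
      show ?thesis
      proof (cases "j = 0")
        case True then show ?thesis using i0 z by simp
      next
        case j0: False
        have lo: "- ev v e \<le> Mx A lb ub j" using M_lower[OF wf g _ j0 v] a i0 by simp
        from r ij j0 have "\<eta> j = \<eta>' j \<or> (real_of_int (Mx A lb ub j) < \<eta> j \<and> real_of_int (Mx A lb ub j) < \<eta>' j)"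
          by auto
        then show ?thesis
        proof
          assume "\<eta> j = \<eta>' j" then show ?thesis using i0 z by simp
        next
          assume h: "real_of_int (Mx A lb ub j) < \<eta> j \<and> real_of_int (Mx A lb ub j) < \<eta>' j"
          have "- real_of_int (ev v e) \<le> real_of_int (Mx A lb ub j)" using lo by linarith
          then show ?thesis using h i0 z by (auto simp: sat_bound_def)
        qed
      qed
    next
      case i0: False
      then have j0: "j = 0" using ij by simp
      have up: "ev v e \<le> Mx A lb ub i" using M_upper[OF wf g _ i0 v] a j0 by simp
      from r ij i0 have "\<eta> i = \<eta>' i \<or> (real_of_int (Mx A lb ub i) < \<eta> i \<and> real_of_int (Mx A lb ub i) < \<eta>' i)"
        by auto
      then show ?thesis
      proof
        assume "\<eta> i = \<eta>' i" then show ?thesis using j0 z by simp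
      next
        assume h: "real_of_int (Mx A lb ub i) < \<eta> i \<and> real_of_int (Mx A lb ub i) < \<eta>' i"
        have "real_of_int (ev v e) \<le> real_of_int (Mx A lb ub i)" using up by linarith
        then show ?thesis using h j0 z by (auto simp: sat_bound_def)
      qed
    qed
  qed
  then show ?thesis unfolding sat_guard_def by fast
qed

lemma guard_in_all: "(l, g, R, l') \<in> trans (fst A) \<Longrightarrow> g \<in> all_guards A"
  by (auto simp: all_guards_def)

lemma inv_in_all: "l \<in> locs (fst A) \<Longrightarrow> inv (fst A) l \<in> all_guards A"
  by (auto simp: all_guards_def)

lemma Rel_sim:
  assumes wf: "wf_ptba A" and v: "v \<in> csem (C0 lb ub)"
  shows "ta_simulation (fst A) v (Rel A lb ub)"
  unfolding ta_simulation_def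
proof (intro allI impI conjI)
  fix s1 s2 assume rel: "(s1, s2) \<in> Rel A lb ub"
  obtain l \<eta> where s1: "s1 = (l, \<eta>)" by (cases s1) auto
  obtain l2 \<eta>' where s2: "s2 = (l2, \<eta>')" by (cases s2) auto
  have R: "l2 = l" "l \<in> locs (fst A)" "\<eta> 0 = 0" "\<eta>' 0 = 0"
     "\<forall>i. 1 \<le> i \<and> i \<le> nclk (fst A) \<longrightarrow> \<eta> i = \<eta>' i \<or>
        (real_of_int (Mx A lb ub i) < \<eta> i \<and> real_of_int (Mx A lb ub i) < \<eta>' i)"
    using rel by (auto simp: Rel_def s1 s2)
  show "fst s1 = fst s2" using R by (simp add: s1 s2)
  show "\<exists>s2'. act_step (fst A) v s2 s2' \<and> (s1', s2') \<in> Rel A lb ub" if a: "act_step (fst A) v s1 s1'" for s1'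
  proof -
    obtain l' \<rho> where s1': "s1' = (l', \<rho>)" by (cases s1') auto
    from a obtain g Rs where t: "(l, g, Rs, l') \<in> trans (fst A)" "sat_guard v \<eta> g" "\<rho> = reset \<eta> Rs"
      "sat_guard v \<rho> (inv (fst A) l')"
      by (auto simp: act_step_def s1 s1')
    have wt: "l' \<in> locs (fst A)" "simple_guard g" "guard_clocks (nclk (fst A)) g"
      using wf_trans[OF wf t(1)] by auto
    have wi: "simple_guard (inv (fst A) l')" "guard_clocks (nclk (fst A)) (inv (fst A) l')"
      using wf_inv[OF wf wt(1)] by auto
    let ?\<rho>' = "reset \<eta>' Rs"
    have z: "\<rho> 0 = 0" "?\<rho>' 0 = 0" using R t(3) by (auto simp: reset_def)
    have rr: "\<forall>i. 1 \<le> i \<and> i \<le> nclk (fst A) \<longrightarrow> \<rho> i = ?\<rho>' i \<or>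
        (real_of_int (Mx A lb ub i) < \<rho> i \<and> real_of_int (Mx A lb ub i) < ?\<rho>' i)"
      using R(5) t(3) by (auto simp: reset_def)
    have g': "sat_guard v \<eta>' g"
      using guard_equiv[OF wf v guard_in_all[OF t(1)] wt(3) wt(2) R(3) R(4) R(5)] t(2) by simp
    have i': "sat_guard v ?\<rho>' (inv (fst A) l')"
      using guard_equiv[OF wf v inv_in_all[OF wt(1)] wi(2) wi(1) z rr] t(4) by simp
    have "act_step (fst A) v s2 (l', ?\<rho>')"
      unfolding act_step_def using t(1) g' i' R(1) by (auto simp: s2)
    moreover have "(s1', (l', ?\<rho>')) \<in> Rel A lb ub"
      using wt(1) z rr by (simp add: Rel_def s1')
    ultimately show ?thesis by blast
  qed
  show "\<exists>s2'. delay_step (fst A) v s2 s2' \<and> (s1', s2') \<in> Rel A lb ub" if a: "delay_step (fst A) v s1 s1'" for s1'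
  proof -
    obtain l' \<rho> where s1': "s1' = (l', \<rho>)" by (cases s1') auto
    from a obtain d where t: "d \<ge> 0" "l' = l" "\<rho> = delay \<eta> d" "sat_guard v \<rho> (inv (fst A) l)"
      by (auto simp: delay_step_def s1 s1')
    have wi: "simple_guard (inv (fst A) l)" "guard_clocks (nclk (fst A)) (inv (fst A) l)"
      using wf_inv[OF wf R(2)] by auto
    let ?\<rho>' = "delay \<eta>' d"
    have z: "\<rho> 0 = 0" "?\<rho>' 0 = 0" using t(3) by (auto simp: delay_def)
    have rr: "\<forall>i. 1 \<le> i \<and> i \<le> nclk (fst A) \<longrightarrow> \<rho> i = ?\<rho>' i \<or>
        (real_of_int (Mx A lb ub i) < \<rho> i \<and> real_of_int (Mx A lb ub i) < ?\<rho>' i)"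
      using R(5) t(1,3) by (auto simp: delay_def)
    have i': "sat_guard v ?\<rho>' (inv (fst A) l)"
      using guard_equiv[OF wf v inv_in_all[OF R(2)] wi(2) wi(1) z rr] t(4) by simp
    have "delay_step (fst A) v s2 (l, ?\<rho>')"
      unfolding delay_step_def using t(1) i' R(1) by (auto simp: s2)
    moreover have "(s1', (l, ?\<rho>')) \<in> Rel A lb ub"
      using R(2) z rr t(2) by (simp add: Rel_def s1')
    ultimately show ?thesis by blast
  qed
qed

lemma Rel_simD:
  assumes wf: "wf_ptba A" and v: "v \<in> csem (C0 lb ub)" and "((l, \<eta>), (l, \<eta>')) \<in> Rel A lb ub"
  shows "sim (fst A) v (l, \<eta>) (l, \<eta>')"
  using Rel_sim[OF wf v] assms(3) by (auto simp: sim_def)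

lemma helly:
  fixes Lo Up :: "(real \<times> bool) set"
  assumes fin: "finite Lo" "finite Up"
    and comp: "\<And>l s u t. (l, s) \<in> Lo \<Longrightarrow> (u, t) \<in> Up \<Longrightarrow> (if s \<and> t then l \<le> u else l < u)"
  shows "\<exists>x. (\<forall>(l, s) \<in> Lo. if s then l \<le> x else l < x) \<and> (\<forall>(u, t) \<in> Up. if t then x \<le> u else x < u)"
proof (cases "Lo = {}")
  case Lo: True
  show ?thesis
  proof (cases "Up = {}")
    case True then show ?thesis using Lo by auto
  next
    case False
    define U where "U = Min (fst ` Up)"
    have "U \<le> u" if "(u, t) \<in> Up" for u t
      using fin(2) that unfolding U_def by (metis Min_le finite_imageI fst_conv image_eqI)
    then show ?thesis using Lo by (intro exI[of _ "U - 1"]) force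
  qed
next
  case Lo: False
  define L where "L = Max (fst ` Lo)"
  have lL: "l \<le> L" if "(l, s) \<in> Lo" for l s
    using fin(1) that unfolding L_def by (metis Max_ge finite_imageI fst_conv image_eqI)
  have "L \<in> fst ` Lo" unfolding L_def using fin(1) Lo by (intro Max_in) auto
  then obtain sL where sL: "(L, sL) \<in> Lo" by force
  show ?thesis
  proof (cases "Up = {}")
    case True then show ?thesis using lL by (intro exI[of _ "L + 1"]) force
  next
    case Up: False
    define U where "U = Min (fst ` Up)"
    have uU: "U \<le> u" if "(u, t) \<in> Up" for u t
      using fin(2) that unfolding U_def by (metis Min_le finite_imageI fst_conv image_eqI)
    have "U \<in> fst ` Up" unfolding U_def using fin(2) Up by (intro Min_in) auto
    then obtain tU where tU: "(U, tU) \<in> Up" by force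
    have LU: "L \<le> U" using comp[OF sL tU] by (auto split: if_splits)
    show ?thesis
    proof (cases "L < U")
      case True
      show ?thesis
      proof (intro exI[of _ "(L + U) / 2"] conjI ballI)
        fix p assume "p \<in> Lo" then show "case p of (l, s) \<Rightarrow> if s then l \<le> (L + U) / 2 else l < (L + U) / 2"
          using lL True by (cases p) (fastforce split: if_splits)
      next
        fix p assume "p \<in> Up" then show "case p of (u, t) \<Rightarrow> if t then (L + U) / 2 \<le> u else (L + U) / 2 < u"
          using uU True by (cases p) (fastforce split: if_splits)
      qed
    next
      case False
      then have LU': "L = U" using LU by simp
      show ?thesis
      proof (intro exI[of _ L] conjI ballI)
        fix p assume p: "p \<in> Lo"
        obtain l s where ps: "p = (l, s)" by (cases p) auto
        have "l \<le> L" using lL p ps by simp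
        moreover have "l = L \<Longrightarrow> s" using comp[of l s U tU] p ps tU LU' by (auto split: if_splits)
        ultimately show "case p of (l, s) \<Rightarrow> if s then l \<le> L else l < L" using ps
          by (cases s) (auto simp: less_le)
      next
        fix p assume p: "p \<in> Up"
        obtain u t where ps: "p = (u, t)" by (cases p) auto
        have "U \<le> u" using uU p ps by simp
        moreover have "u = U \<Longrightarrow> t" using comp[of L sL u t] p ps sL LU' by (auto split: if_splits)
        ultimately show "case p of (u, t) \<Rightarrow> if t then L \<le> u else L < u" using ps LU'
          by (cases t) (auto simp: less_le)
      qed
    qed
  qed
qed

fun bval :: "eb \<Rightarrow> int" where "bval (EFin c s) = c" | "bval EInf = 0"
fun bst :: "eb \<Rightarrow> bool" where "bst (EFin c s) = s" | "bst EInf = True"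

lemma fin_eq: "x \<noteq> EInf \<Longrightarrow> x = EFin (bval x) (bst x)"
  by (cases x) auto

lemma sat_fin: "x \<noteq> EInf \<Longrightarrow> sat_e x d \<longleftrightarrow> (if bst x then d \<le> real_of_int (bval x) else d < real_of_int (bval x))"
  by (cases x) auto

lemma base_S:
  assumes "ent_ok (M i) (M j) x x'" "sat_e x' (\<eta> i - \<eta> j)" "\<eta> i \<le> real_of_int (M i)"
    "\<eta> j \<le> real_of_int (M j)" "0 \<le> \<eta> j" "0 \<le> \<eta> i"
  shows "sat_e x (\<eta> i - \<eta> j)"
  using assms unfolding ent_ok_def
  by (auto split: if_splits; linarith)

definition Qp :: "(nat \<Rightarrow> int) \<Rightarrow> eb \<Rightarrow> nat \<Rightarrow> real \<Rightarrow> bool" where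
  "Qp M x b r \<longleftrightarrow> x = EInf \<or> (\<exists>c s. x = EFin c s \<and> real_of_int (M b) - r < real_of_int c)"

lemma Q_base:
  assumes "ent_ok (M b) (M t) x x'" "sat_e x' (\<eta> b - \<eta> t)" "real_of_int (M b) < \<eta> b"
    "\<eta> t \<le> real_of_int (M t)" "0 \<le> \<eta> t" "0 \<le> \<eta> b"
  shows "Qp M x b (\<eta> t)"
  using assms unfolding ent_ok_def Qp_def
  by (auto split: if_splits)

lemma core:
  fixes X X' :: mat and M :: "nat \<Rightarrow> int" and \<eta> :: clockval
  assumes tri: "tri n X" and r0: "row0 n X" and M0: "M 0 = 0"
    and ent: "\<And>i j. i \<le> n \<Longrightarrow> j \<le> n \<Longrightarrow> ent_ok (M i) (M j) (X i j) (X' i j)"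
    and sat': "\<And>i j. i \<le> n \<Longrightarrow> j \<le> n \<Longrightarrow> sat_e (X' i j) (\<eta> i - \<eta> j)"
    and z: "\<eta> 0 = 0" and nn: "\<And>i. 0 \<le> \<eta> i"
  shows "\<exists>\<eta>'. (\<forall>i \<le> n. \<forall>j \<le> n. sat_e (X i j) (\<eta>' i - \<eta>' j)) \<and> \<eta>' 0 = 0 \<and> (\<forall>i. 0 \<le> \<eta>' i) \<and>
     (\<forall>i. n < i \<longrightarrow> \<eta>' i = \<eta> i) \<and>
     (\<forall>i. 1 \<le> i \<and> i \<le> n \<longrightarrow> \<eta> i = \<eta>' i \<or> (real_of_int (M i) < \<eta> i \<and> real_of_int (M i) < \<eta>' i))"
proof -
  define S where "S = {i. i \<le> n \<and> \<eta> i \<le> real_of_int (M i)}"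
  define B where "B = {i. i \<le> n \<and> real_of_int (M i) < \<eta> i}"
  have S0: "0 \<in> S" using z M0 by (simp add: S_def)
  have B0: "0 \<notin> B" using z M0 by (simp add: B_def)
  have finB: "finite B" unfolding B_def by simp
  have finS: "finite S" unfolding S_def by simp
  have SB: "i \<le> n \<Longrightarrow> i \<in> S \<or> i \<in> B" for i by (auto simp: S_def B_def)
  have SnB: "i \<in> S \<Longrightarrow> i \<notin> B" for i by (auto simp: S_def B_def)
  have diag: "\<And>i. i \<le> n \<Longrightarrow> 0 \<le> X i i" and triX: "\<And>i j k. i \<le> n \<Longrightarrow> j \<le> n \<Longrightarrow> k \<le> n \<Longrightarrow> X i j \<le> X i k + X k j"
    using tri by (auto simp: tri_def)
  define Inv where "Inv bs \<rho> \<longleftrightarrow> (\<forall>i. i \<notin> set bs \<longrightarrow> \<rho> i = \<eta> i) \<and> (\<forall>t \<in> set bs. real_of_int (M t) < \<rho> t) \<and>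
       (\<forall>i. 0 \<le> \<rho> i) \<and> (\<forall>i \<in> S \<union> set bs. \<forall>j \<in> S \<union> set bs. sat_e (X i j) (\<rho> i - \<rho> j)) \<and>
       (\<forall>t \<in> S \<union> set bs. \<forall>b \<in> B. Qp M (X b t) b (\<rho> t))" for bs \<rho>
  have ext: "\<exists>\<rho>. Inv bs \<rho>" if "set bs \<subseteq> B" "distinct bs" for bs
    using that
  proof (induction bs)
    case Nil
    have "Inv [] \<eta>"
      unfolding Inv_def
    proof (intro conjI ballI allI impI)
      fix i j assume "i \<in> S \<union> set []" "j \<in> S \<union> set []"
      then have ij: "i \<in> S" "j \<in> S" by auto
      show "sat_e (X i j) (\<eta> i - \<eta> j)"
        using base_S[of M i j "X i j" "X' i j" \<eta>] ent[of i j] sat'[of i j] ij nn by (auto simp: S_def)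
    next
      fix t b assume "t \<in> S \<union> set []" "b \<in> B"
      then show "Qp M (X b t) b (\<eta> t)"
        using Q_base[of M b t "X b t" "X' b t" \<eta>] ent[of b t] sat'[of b t] nn by (auto simp: S_def B_def)
    qed (auto simp: nn)
    then show ?case by blast
  next
    case (Cons k bs)
    then obtain \<rho> where I: "Inv bs \<rho>" by auto
    have kB: "k \<in> B" and kbs: "k \<notin> set bs" using Cons.prems by auto
    have kn: "k \<le> n" using kB by (simp add: B_def)
    have k0: "k \<noteq> 0" using kB B0 by metis
    define T where "T = S \<union> set bs"
    have kT: "k \<notin> T" using kB kbs SnB T_def by blast
    have Tn: "t \<in> T \<Longrightarrow> t \<le> n" for t using Cons.prems by (auto simp: T_def S_def B_def)
    have T0: "0 \<in> T" using S0 by (simp add: T_def)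
    have finT: "finite T" using finS by (simp add: T_def)
    have Isat: "\<And>i j. i \<in> T \<Longrightarrow> j \<in> T \<Longrightarrow> sat_e (X i j) (\<rho> i - \<rho> j)"
      and IQ: "\<And>t b. t \<in> T \<Longrightarrow> b \<in> B \<Longrightarrow> Qp M (X b t) b (\<rho> t)"
      and Ieq: "\<And>i. i \<notin> set bs \<Longrightarrow> \<rho> i = \<eta> i" and IM: "\<And>t. t \<in> set bs \<Longrightarrow> real_of_int (M t) < \<rho> t"
      and Inn: "\<And>i. 0 \<le> \<rho> i"
      using I by (auto simp: Inv_def T_def)
    define Lo1 where "Lo1 = (\<lambda>t. (\<rho> t - real_of_int (bval (X t k)), bst (X t k))) ` {t \<in> T. X t k \<noteq> EInf}"
    define Lo2 where "Lo2 = (\<lambda>b. (real_of_int (M b) - real_of_int (bval (X b k)), False)) ` {b \<in> B. X b k \<noteq> EInf}"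
    define Lo where "Lo = Lo1 \<union> Lo2 \<union> {(real_of_int (M k), False)}"
    define Up where "Up = (\<lambda>t. (\<rho> t + real_of_int (bval (X k t)), bst (X k t))) ` {t \<in> T. X k t \<noteq> EInf}"
    have comp: "(if s \<and> t then l \<le> u else l < u)" if "(l, s) \<in> Lo" "(u, t) \<in> Up" for l s u t
    proof -
      from that(2) obtain t' where t': "t' \<in> T" "X k t' \<noteq> EInf" "u = \<rho> t' + real_of_int (bval (X k t'))" "t = bst (X k t')"
        by (auto simp: Up_def)
      have t'n: "t' \<le> n" using Tn t'(1) by simp
      from that(1) consider "(l, s) \<in> Lo1" | "(l, s) \<in> Lo2" | "(l, s) = (real_of_int (M k), False)"
        by (auto simp: Lo_def)
      then show ?thesis
      proof cases
        case 1
        then obtain t0 where t0: "t0 \<in> T" "X t0 k \<noteq> EInf" "l = \<rho> t0 - real_of_int (bval (X t0 k))" "s = bst (X t0 k)"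
          by (auto simp: Lo1_def)
        have "sat_e (X t0 t') (\<rho> t0 - \<rho> t')" using Isat t0(1) t'(1) by simp
        moreover have "X t0 t' \<le> X t0 k + X k t'" using triX Tn t0(1) t'(1) kn by simp
        ultimately have "sat_e (X t0 k + X k t') (\<rho> t0 - \<rho> t')" by (rule sat_mono[rotated])
        then have "sat_e (EFin (bval (X t0 k)) (bst (X t0 k)) + EFin (bval (X k t')) (bst (X k t'))) (\<rho> t0 - \<rho> t')"
          using fin_eq[OF t0(2)] fin_eq[OF t'(2)] by simp
        then show ?thesis using t0 t' by (auto split: if_splits)
      next
        case 2
        then obtain b where b: "b \<in> B" "X b k \<noteq> EInf" "l = real_of_int (M b) - real_of_int (bval (X b k))" "s = False"
          by (auto simp: Lo2_def)
        have bn: "b \<le> n" using b(1) by (simp add: B_def)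
        have le: "X b t' \<le> EFin (bval (X b k)) (bst (X b k)) + EFin (bval (X k t')) (bst (X k t'))"
          using triX[OF bn t'n kn] fin_eq[OF b(2)] fin_eq[OF t'(2)] by simp
        have "Qp M (X b t') b (\<rho> t')" using IQ t'(1) b(1) by simp
        then obtain c s' where c: "X b t' = EFin c s'" "real_of_int (M b) - \<rho> t' < real_of_int c"
          using le by (auto simp: Qp_def)
        have "c \<le> bval (X b k) + bval (X k t')" using le c(1) by auto
        then show ?thesis using c b t' by (auto split: if_splits)
      next
        case 3
        have "Qp M (X k t') k (\<rho> t')" using IQ t'(1) kB by simp
        then show ?thesis using 3 t' fin_eq[OF t'(2)] by (auto simp: Qp_def split: if_splits)
      qed
    qed
    have finLo: "finite Lo" using finT finB by (simp add: Lo_def Lo1_def Lo2_def)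
    have finUp: "finite Up" using finT by (simp add: Up_def)
    obtain x where x: "\<forall>(l, s) \<in> Lo. if s then l \<le> x else l < x" "\<forall>(u, t) \<in> Up. if t then x \<le> u else x < u"
      using helly[OF finLo finUp comp] by blast
    define \<rho>' where "\<rho>' = \<rho>(k := x)"
    have xM: "real_of_int (M k) < x" using x(1) by (auto simp: Lo_def)
    have lo1: "sat_e (X t k) (\<rho> t - x)" if "t \<in> T" for t
    proof (cases "X t k = EInf")
      case True then show ?thesis by simp
    next
      case False
      then have "(\<rho> t - real_of_int (bval (X t k)), bst (X t k)) \<in> Lo" using that by (auto simp: Lo_def Lo1_def)
      then show ?thesis using x(1) sat_fin[OF False] by (auto split: if_splits)
    qed
    have up1: "sat_e (X k t) (x - \<rho> t)" if "t \<in> T" for t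
    proof (cases "X k t = EInf")
      case True then show ?thesis by simp
    next
      case False
      then have "(\<rho> t + real_of_int (bval (X k t)), bst (X k t)) \<in> Up" using that by (auto simp: Up_def)
      then show ?thesis using x(2) sat_fin[OF False] by (auto split: if_splits)
    qed
    have lo2: "Qp M (X b k) b x" if "b \<in> B" for b
    proof (cases "X b k = EInf")
      case True then show ?thesis by (simp add: Qp_def)
    next
      case False
      then have "(real_of_int (M b) - real_of_int (bval (X b k)), False) \<in> Lo" using that by (auto simp: Lo_def Lo2_def)
      then show ?thesis using x(1) fin_eq[OF False] unfolding Qp_def by (metis (no_types, lifting) case_prodD diff_less_eq add.commute)
    qed
    have x0: "0 \<le> x"
    proof -
      have "X 0 k \<le> 0" using r0 kn by (simp add: row0_def)
      then obtain c s where c: "X 0 k = EFin c s" "c \<le> 0" using le_zero_fin by blast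
      have "sat_e (X 0 k) (\<rho> 0 - x)" using lo1 T0 by simp
      moreover have "\<rho> 0 = 0" using Ieq[of 0] z kbs Cons.prems B0 by auto
      ultimately show ?thesis using c by (auto split: if_splits)
    qed
    have "Inv (k # bs) \<rho>'"
      unfolding Inv_def
    proof (intro conjI ballI allI impI)
      fix i assume "i \<notin> set (k # bs)" then show "\<rho>' i = \<eta> i" using Ieq by (simp add: \<rho>'_def)
    next
      fix t assume "t \<in> set (k # bs)" then show "real_of_int (M t) < \<rho>' t"
        using IM xM by (auto simp: \<rho>'_def)
    next
      fix i show "0 \<le> \<rho>' i" using Inn x0 by (simp add: \<rho>'_def)
    next
      fix i j assume "i \<in> S \<union> set (k # bs)" "j \<in> S \<union> set (k # bs)"
      then have ij: "i = k \<or> i \<in> T" "j = k \<or> j \<in> T" by (auto simp: T_def)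
      show "sat_e (X i j) (\<rho>' i - \<rho>' j)"
      proof (cases "i = k")
        case True
        show ?thesis
        proof (cases "j = k")
          case True then show ?thesis using \<open>i = k\<close> diag[OF kn] sat_zero by simp
        next
          case False then show ?thesis using True ij up1[of j] by (simp add: \<rho>'_def)
        qed
      next
        case False
        then have iT: "i \<in> T" using ij by simp
        show ?thesis
        proof (cases "j = k")
          case True then show ?thesis using False iT lo1[of i] by (simp add: \<rho>'_def)
        next
          case jk: False
          then have "j \<in> T" using ij by simp
          then show ?thesis using Isat iT False jk by (simp add: \<rho>'_def)
        qed
      qed
    next
      fix t b assume "t \<in> S \<union> set (k # bs)" "b \<in> B"
      then show "Qp M (X b t) b (\<rho>' t)"
        using IQ lo2 kT by (auto simp: \<rho>'_def T_def)
    qed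
    then show ?case by blast
  qed
  define bs where "bs = sorted_list_of_set B"
  have bs: "set bs = B" "distinct bs" using finB by (auto simp: bs_def)
  then obtain \<rho> where I: "Inv bs \<rho>" using ext by blast
  show ?thesis
  proof (intro exI[of _ \<rho>] conjI allI impI)
    fix i j assume "i \<le> n" "j \<le> n"
    then show "sat_e (X i j) (\<rho> i - \<rho> j)" using I SB bs(1) by (auto simp: Inv_def)
  next
    show "\<rho> 0 = 0" using I B0 bs(1) z by (auto simp: Inv_def)
  next
    fix i show "0 \<le> \<rho> i" using I by (auto simp: Inv_def)
  next
    fix i assume "n < i" then show "\<rho> i = \<eta> i" using I bs(1) by (auto simp: Inv_def B_def)
  next
    fix i assume i: "1 \<le> i \<and> i \<le> n"
    show "\<eta> i = \<rho> i \<or> (real_of_int (M i) < \<eta> i \<and> real_of_int (M i) < \<rho> i)"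
    proof (cases "i \<in> B")
      case True then show ?thesis using I bs(1) by (auto simp: Inv_def B_def)
    next
      case False then show ?thesis using I bs(1) by (auto simp: Inv_def)
    qed
  qed
qed

lemma foldl_gstep_cases:
  "foldl (gstep v) Y g i j = Y i j \<or> (\<exists>b e. (i, j, b, e) \<in> set g \<and> foldl (gstep v) Y g i j = EFin (ev v e) b)"
proof (induction g arbitrary: Y)
  case Nil then show ?case by simp
next
  case (Cons a g)
  obtain a1 a2 b e where a: "a = (a1, a2, b, e)" by (cases a) auto
  have "foldl (gstep v) Y (a # g) = foldl (gstep v) (gstep v Y a) g" by simp
  moreover have "gstep v Y a i j = Y i j \<or> (gstep v Y a i j = EFin (ev v e) b \<and> (i, j) = (a1, a2))"
    by (auto simp: gstep_def a min_def)
  ultimately show ?case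
  proof -
    assume h1: "foldl (gstep v) Y (a # g) = foldl (gstep v) (gstep v Y a) g"
      and h2: "gstep v Y a i j = Y i j \<or> (gstep v Y a i j = EFin (ev v e) b \<and> (i, j) = (a1, a2))"
    from Cons.IH[of "gstep v Y a"] show ?thesis
    proof
      assume h3: "foldl (gstep v) (gstep v Y a) g i j = gstep v Y a i j"
      from h2 show ?thesis
      proof
        assume "gstep v Y a i j = Y i j" then show ?thesis using h1 h3 by simp
      next
        assume h4: "gstep v Y a i j = EFin (ev v e) b \<and> (i, j) = (a1, a2)"
        then have "(i, j, b, e) \<in> set (a # g)" using a by simp
        moreover have "foldl (gstep v) Y (a # g) i j = EFin (ev v e) b" using h1 h3 h4 by simp
        ultimately show ?thesis by blast
      qed
    next
      assume "\<exists>b e. (i, j, b, e) \<in> set g \<and> foldl (gstep v) (gstep v Y a) g i j = EFin (ev v e) b"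
      then show ?thesis using h1 by auto
    qed
  qed
qed

lemma core_init:
  fixes X X' :: mat and M :: "nat \<Rightarrow> int" and \<eta> :: clockval
  assumes M0: "M 0 = 0"
    and I1: "\<And>i j. 1 \<le> i \<Longrightarrow> i \<le> n \<Longrightarrow> 1 \<le> j \<Longrightarrow> j \<le> n \<Longrightarrow> X i j = 0"
    and I2: "\<And>k. 1 \<le> k \<Longrightarrow> k \<le> n \<Longrightarrow> X k 0 = EInf \<or> (\<exists>c s. X k 0 = EFin c s \<and> c \<le> M k)"
    and I3: "\<And>k. 1 \<le> k \<Longrightarrow> k \<le> n \<Longrightarrow> X 0 k = 0 \<or> (\<exists>c s. X 0 k = EFin c s \<and> - M k \<le> c)"
    and ent: "\<And>i j. i \<le> n \<Longrightarrow> j \<le> n \<Longrightarrow> ent_ok (M i) (M j) (X i j) (X' i j)"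
    and sat': "\<And>i j. i \<le> n \<Longrightarrow> j \<le> n \<Longrightarrow> sat_e (X' i j) (\<eta> i - \<eta> j)"
    and z: "\<eta> 0 = 0" and nn: "\<And>i. 0 \<le> \<eta> i"
  shows "\<exists>\<eta>'. (\<forall>i \<le> n. \<forall>j \<le> n. sat_e (X i j) (\<eta>' i - \<eta>' j)) \<and> \<eta>' 0 = 0 \<and> (\<forall>i. 0 \<le> \<eta>' i) \<and>
     (\<forall>i. n < i \<longrightarrow> \<eta>' i = \<eta> i) \<and>
     (\<forall>i. 1 \<le> i \<and> i \<le> n \<longrightarrow> \<eta> i = \<eta>' i \<or> (real_of_int (M i) < \<eta> i \<and> real_of_int (M i) < \<eta>' i))"
proof -
  define R where "R = {i. 1 \<le> i \<and> i \<le> n \<and> 0 \<le> M i}"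
  have eqR: "\<eta> r1 \<le> \<eta> r2" if "r1 \<in> R" "r2 \<in> R" for r1 r2
  proof -
    have r: "1 \<le> r1" "r1 \<le> n" "1 \<le> r2" "r2 \<le> n" "0 \<le> M r1" "0 \<le> M r2" using that by (auto simp: R_def)
    have x: "X r1 r2 = EFin 0 True" using I1 r by (simp add: zero_eb_def)
    have "X' r1 r2 = X r1 r2" using ent[of r1 r2] r x by (auto simp: ent_ok_def)
    then show ?thesis using sat'[of r1 r2] r x by simp
  qed
  define t where "t = (if R = {} then 0 else \<eta> (SOME r. r \<in> R))"
  have tR: "\<eta> r = t" if "r \<in> R" for r
  proof -
    have "(SOME r. r \<in> R) \<in> R" using that by (rule someI)
    then show ?thesis using eqR that by (auto simp: t_def intro: antisym)
  qed
  have t0: "0 \<le> t" using nn by (simp add: t_def)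
  define \<eta>' where "\<eta>' = (\<lambda>i. if 1 \<le> i \<and> i \<le> n then t else \<eta> i)"
  have sat00: "sat_e (X 0 0) 0"
  proof -
    have "ent_ok 0 0 (X 0 0) (X' 0 0)" "sat_e (X' 0 0) 0" using ent[of 0 0] sat'[of 0 0] z M0 by auto
    then show ?thesis by (auto simp: ent_ok_def split: if_splits)
  qed
  have satk0: "sat_e (X k 0) t" if k: "1 \<le> k" "k \<le> n" for k
  proof (cases "X k 0 = EInf")
    case True then show ?thesis by simp
  next
    case False
    then obtain c s where c: "X k 0 = EFin c s" "c \<le> M k" using I2[OF k] by auto
    have e: "ent_ok (M k) 0 (X k 0) (X' k 0)" "sat_e (X' k 0) (\<eta> k)" using ent[of k 0] sat'[of k 0] k z M0 by auto
    show ?thesis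
    proof (cases "k \<in> R")
      case True
      then show ?thesis using e c tR[OF True] nn[of k] by (auto simp: ent_ok_def split: if_splits)
    next
      case False
      then have "M k < 0" using k by (auto simp: R_def)
      then show ?thesis using e c nn[of k] by (auto simp: ent_ok_def split: if_splits)
    qed
  qed
  have sat0k: "sat_e (X 0 k) (- t)" if k: "1 \<le> k" "k \<le> n" for k
  proof (cases "X 0 k = 0")
    case True then show ?thesis using t0 by (simp add: zero_eb_def)
  next
    case False
    then obtain c s where c: "X 0 k = EFin c s" "- M k \<le> c" using I3[OF k] by auto
    have e: "ent_ok 0 (M k) (X 0 k) (X' 0 k)" "sat_e (X' 0 k) (- \<eta> k)" using ent[of 0 k] sat'[of 0 k] k z M0 by auto
    show ?thesis
    proof (cases "k \<in> R")
      case True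
      then show ?thesis using e c tR[OF True] t0 by (auto simp: ent_ok_def split: if_splits)
    next
      case False
      then have "M k < 0" using k by (auto simp: R_def)
      then show ?thesis using c t0 by (auto split: if_splits)
    qed
  qed
  show ?thesis
  proof (intro exI[of _ \<eta>'] conjI allI impI)
    fix i j assume ij: "i \<le> n" "j \<le> n"
    show "sat_e (X i j) (\<eta>' i - \<eta>' j)"
    proof (cases "i = 0")
      case True
      show ?thesis
      proof (cases "j = 0")
        case True then show ?thesis using \<open>i = 0\<close> sat00 z by (simp add: \<eta>'_def)
      next
        case False then show ?thesis using True sat0k[of j] ij z by (simp add: \<eta>'_def)
      qed
    next
      case i0: False
      show ?thesis
      proof (cases "j = 0")
        case True then show ?thesis using i0 satk0[of i] ij z by (simp add: \<eta>'_def)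
      next
        case False then show ?thesis using i0 I1[of i j] ij by (simp add: \<eta>'_def zero_eb_def)
      qed
    qed
  next
    show "\<eta>' 0 = 0" using z by (simp add: \<eta>'_def)
  next
    fix i show "0 \<le> \<eta>' i" using nn t0 by (simp add: \<eta>'_def)
  next
    fix i assume "n < i" then show "\<eta>' i = \<eta> i" by (simp add: \<eta>'_def)
  next
    fix i assume i: "1 \<le> i \<and> i \<le> n"
    show "\<eta> i = \<eta>' i \<or> (real_of_int (M i) < \<eta> i \<and> real_of_int (M i) < \<eta>' i)"
    proof (cases "i \<in> R")
      case True then show ?thesis using tR i by (simp add: \<eta>'_def)
    next
      case False
      then have "M i < 0" using i by (auto simp: R_def)
      then show ?thesis using nn[of i] t0 i by (simp add: \<eta>'_def)
    qed
  qed
qed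

lemma ent_mono: "ent_ok Mi Mj x x' \<Longrightarrow> sat_e x d \<Longrightarrow> sat_e x' d"
  unfolding ent_ok_def by (auto split: if_splits)

lemma neg00: "x < 0 \<Longrightarrow> ent_ok 0 0 x x' \<Longrightarrow> sat_e x' 0 \<Longrightarrow> False"
  unfolding ent_ok_def by (cases x) (auto simp: zero_eb_def less_eb_def split: if_splits)

lemma zoneD:
  assumes "(v, \<eta>) \<in> zone n C D"
  shows "v \<in> csem C" "\<eta> 0 = 0" "\<And>i. 0 \<le> \<eta> i" "\<And>i j. i \<le> n \<Longrightarrow> j \<le> n \<Longrightarrow> sat_e (evd v D i j) (\<eta> i - \<eta> j)"
  using assms by (auto simp: zone_def sat_bnd_evb evd_def)

lemma zoneI:
  assumes "v \<in> csem C" "\<eta> 0 = 0" "\<And>i. 0 \<le> \<eta> i" "\<And>i j. i \<le> n \<Longrightarrow> j \<le> n \<Longrightarrow> sat_e (evd v D i j) (\<eta> i - \<eta> j)"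
  shows "(v, \<eta>) \<in> zone n C D"
  using assms by (auto simp: zone_def sat_bnd_evb evd_def)

lemma sound:
  assumes wf: "wf_ptba A" and S1: "(l, C, D) \<in> sym_reach A lb ub"
    and pk: "pk_ok A lb ub (C, D) (C', D')" and z: "(v, \<eta>) \<in> zone (nclk (fst A)) C' D'"
  shows "\<exists>\<eta>'. (v, \<eta>') \<in> zone (nclk (fst A)) C D \<and> sim (fst A) v (l, \<eta>) (l, \<eta>')"
proof -
  let ?n = "nclk (fst A)" and ?M = "Mx A lb ub"
  have v': "v \<in> csem C'" and z0: "\<eta> 0 = 0" and nn: "\<And>i. 0 \<le> \<eta> i"
    and sat': "\<And>i j. i \<le> ?n \<Longrightarrow> j \<le> ?n \<Longrightarrow> sat_e (evd v D' i j) (\<eta> i - \<eta> j)"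
    using zoneD[OF z] by auto
  have CC: "C \<subseteq> C'" and ent: "\<And>i j. i \<le> ?n \<Longrightarrow> j \<le> ?n \<Longrightarrow> ent_ok (?M i) (?M j) (evd v D i j) (evd v D' i j)"
    using pk_entry[OF pk v'] by auto
  have v: "v \<in> csem C" using v' csem_mono[OF CC] by blast
  have RI: "Wst A lb ub (l, C, D) \<and> ((l, C, D) \<in> sym_init A lb ub \<or> Cst A (l, C, D))"
    using reach_inv[OF wf S1] .
  then have lL: "l \<in> locs (fst A)" and C0C: "C0 lb ub \<subseteq> C" and r0: "row0 ?n (evd v D)"
    using v by (auto simp: Wst_def)
  have v0: "v \<in> csem (C0 lb ub)" using v csem_mono[OF C0C] by blast
  have M0: "?M 0 = 0" by (rule Mx0)
  have ex: "\<exists>\<eta>'. (\<forall>i \<le> ?n. \<forall>j \<le> ?n. sat_e (evd v D i j) (\<eta>' i - \<eta>' j)) \<and> \<eta>' 0 = 0 \<and> (\<forall>i. 0 \<le> \<eta>' i) \<and>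
     (\<forall>i. ?n < i \<longrightarrow> \<eta>' i = \<eta> i) \<and>
     (\<forall>i. 1 \<le> i \<and> i \<le> ?n \<longrightarrow> \<eta> i = \<eta>' i \<or> (real_of_int (?M i) < \<eta> i \<and> real_of_int (?M i) < \<eta>' i))"
  proof (cases "(l, C, D) \<in> sym_init A lb ub")
    case False
    then have "Cst A (l, C, D)" using RI by simp
    then have "evd v D 0 0 < 0 \<or> tri ?n (evd v D)" using v by (auto simp: Cst_def)
    then show ?thesis
    proof
      assume "evd v D 0 0 < 0"
      moreover have "ent_ok 0 0 (evd v D 0 0) (evd v D' 0 0)" using ent[of 0 0] M0 by simp
      moreover have "sat_e (evd v D' 0 0) 0" using sat'[of 0 0] by simp
      ultimately show ?thesis using neg00 by blast
    next
      assume "tri ?n (evd v D)"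
      then show ?thesis using core[of ?n "evd v D" ?M "evd v D'" \<eta>] r0 M0 ent sat' z0 nn by blast
    qed
  next
    case True
    let ?l0 = "init (fst A)" and ?g = "inv (fst A) (init (fst A))"
    have l0: "l = ?l0" and ag: "(C, D) \<in> app_guard ?g (C0 lb ub, up E_dbm)"
      using True by (auto simp: sym_init_def)
    have l0L: "?l0 \<in> locs (fst A)" using wf by (auto simp: wf_ptba_def Let_def)
    have sg: "simple_guard ?g" using wf_inv[OF wf l0L] by simp
    have gall: "?g \<in> all_guards A" using inv_in_all[OF l0L] .
    have X: "evd v D = foldl (gstep v) (evd v (up E_dbm)) ?g" using app_guard_ev[OF ag v] by simp
    have I1: "evd v D i j = 0" if "1 \<le> i" "i \<le> ?n" "1 \<le> j" "j \<le> ?n" for i j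
    proof -
      have "evd v D i j = evd v (up E_dbm) i j" using foldl_gstep_keep[OF sg that(1) that(3)] X by simp
      also have "\<dots> = 0" using that by (simp add: evd_upE)
      finally show ?thesis .
    qed
    have I2: "evd v D k 0 = EInf \<or> (\<exists>c s. evd v D k 0 = EFin c s \<and> c \<le> ?M k)" if "1 \<le> k" "k \<le> ?n" for k
    proof -
      have "foldl (gstep v) (evd v (up E_dbm)) ?g k 0 = evd v (up E_dbm) k 0 \<or>
        (\<exists>b e. (k, 0, b, e) \<in> set ?g \<and> foldl (gstep v) (evd v (up E_dbm)) ?g k 0 = EFin (ev v e) b)"
        by (rule foldl_gstep_cases)
      then show ?thesis
      proof
        assume "foldl (gstep v) (evd v (up E_dbm)) ?g k 0 = evd v (up E_dbm) k 0"
        then show ?thesis using X that by (simp add: evd_upE)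
      next
        assume "\<exists>b e. (k, 0, b, e) \<in> set ?g \<and> foldl (gstep v) (evd v (up E_dbm)) ?g k 0 = EFin (ev v e) b"
        then obtain b e where "(k, 0, b, e) \<in> set ?g" "evd v D k 0 = EFin (ev v e) b" using X by auto
        moreover have "ev v e \<le> ?M k" using M_upper[OF wf gall calculation(1) _ v0] that by simp
        ultimately show ?thesis by blast
      qed
    qed
    have I3: "evd v D 0 k = 0 \<or> (\<exists>c s. evd v D 0 k = EFin c s \<and> - ?M k \<le> c)" if "1 \<le> k" "k \<le> ?n" for k
    proof -
      have "foldl (gstep v) (evd v (up E_dbm)) ?g 0 k = evd v (up E_dbm) 0 k \<or>
        (\<exists>b e. (0, k, b, e) \<in> set ?g \<and> foldl (gstep v) (evd v (up E_dbm)) ?g 0 k = EFin (ev v e) b)"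
        by (rule foldl_gstep_cases)
      then show ?thesis
      proof
        assume "foldl (gstep v) (evd v (up E_dbm)) ?g 0 k = evd v (up E_dbm) 0 k"
        then show ?thesis using X that by (simp add: evd_upE)
      next
        assume "\<exists>b e. (0, k, b, e) \<in> set ?g \<and> foldl (gstep v) (evd v (up E_dbm)) ?g 0 k = EFin (ev v e) b"
        then obtain b e where "(0, k, b, e) \<in> set ?g" "evd v D 0 k = EFin (ev v e) b" using X by auto
        moreover have "- ev v e \<le> ?M k" using M_lower[OF wf gall calculation(1) _ v0] that by simp
        ultimately show ?thesis by (metis neg_le_iff_le minus_minus)
      qed
    qed
    show ?thesis
      using core_init[of ?M ?n "evd v D" "evd v D'" \<eta>] M0 I1 I2 I3 ent sat' z0 nn by blast
  qed
  then obtain \<eta>' where e: "\<forall>i \<le> ?n. \<forall>j \<le> ?n. sat_e (evd v D i j) (\<eta>' i - \<eta>' j)" "\<eta>' 0 = 0" "\<forall>i. 0 \<le> \<eta>' i"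
     "\<forall>i. 1 \<le> i \<and> i \<le> ?n \<longrightarrow> \<eta> i = \<eta>' i \<or> (real_of_int (?M i) < \<eta> i \<and> real_of_int (?M i) < \<eta>' i)"
    by blast
  have "(v, \<eta>') \<in> zone ?n C D" using zoneI[OF v] e by blast
  moreover have "((l, \<eta>), (l, \<eta>')) \<in> Rel A lb ub" using lL z0 e by (simp add: Rel_def)
  ultimately show ?thesis using Rel_simD[OF wf v0] by blast
qed

lemma is_abs:
  assumes wf: "wf_ptba A"
  shows "is_abstraction A lb ub (alpha_pk A lb ub)"
  unfolding is_abstraction_def Let_def
proof (intro ballI)
  fix S1 S2 assume S1: "S1 \<in> sym_reach A lb ub" and S2: "S2 \<in> alpha_pk A lb ub S1"
  obtain l C D where s1: "S1 = (l, C, D)" by (cases S1) auto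
  obtain l' C' D' where s2: "S2 = (l', C', D')" by (cases S2) auto
  have ll: "l' = l" and pk: "pk_ok A lb ub (C, D) (C', D')" using S2 by (auto simp: s1 s2 alpha_pk_def)
  let ?n = "nclk (fst A)"
  have CC: "C \<subseteq> C'" using pk_entry(1)[OF pk] pk unfolding pk_ok_def Let_def by auto
  have zz: "zone ?n C' D \<subseteq> zone ?n C' D'"
  proof
    fix x assume x: "x \<in> zone ?n C' D"
    obtain v \<eta> where xv: "x = (v, \<eta>)" by (cases x) auto
    have d: "v \<in> csem C'" "\<eta> 0 = 0" "\<And>i. 0 \<le> \<eta> i" "\<And>i j. i \<le> ?n \<Longrightarrow> j \<le> ?n \<Longrightarrow> sat_e (evd v D i j) (\<eta> i - \<eta> j)"
      using zoneD[of v \<eta> ?n C' D] x xv by auto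
    have "\<And>i j. i \<le> ?n \<Longrightarrow> j \<le> ?n \<Longrightarrow> sat_e (evd v D' i j) (\<eta> i - \<eta> j)"
      using pk_entry(2)[OF pk d(1)] d(4) ent_mono by blast
    then show "x \<in> zone ?n C' D'" using zoneI[of v C' \<eta> ?n D'] d xv by blast
  qed
  show "case S1 of (l, C, D) \<Rightarrow> case S2 of (l', C', D') \<Rightarrow>
          l' = l \<and> csem C' \<subseteq> csem C \<and> zone ?n C' D \<subseteq> zone ?n C' D' \<and>
          (\<forall>v \<eta>. (v, \<eta>) \<in> zone ?n C' D' \<longrightarrow>
              (\<exists>\<eta>'. (v, \<eta>') \<in> zone ?n C D \<and> sim (fst A) v (l', \<eta>) (l, \<eta>')))"
    using ll csem_mono[OF CC] zz sound[OF wf S1[unfolded s1] pk] by (simp add: s1 s2)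
qed

definition ZZ :: "nat \<Rightarrow> 'p pval set \<Rightarrow> ('p pval \<times> nat \<times> nat \<Rightarrow> eb) \<Rightarrow> ('p pval \<times> clockval) set" where
  "ZZ n V G = {(v, \<eta>). v \<in> V \<and> \<eta> 0 = 0 \<and> (\<forall>i. 0 \<le> \<eta> i) \<and> (\<forall>i \<le> n. \<forall>j \<le> n. sat_e (G (v, i, j)) (\<eta> i - \<eta> j))}"

lemma zone_ZZ:
  "zone n C D = ZZ n (csem C) (\<lambda>(v, i, j). if v \<in> csem C \<and> i \<le> n \<and> j \<le> n then evd v D i j else EInf)"
  by (auto simp: zone_def ZZ_def sat_bnd_evb evd_def)

lemma box_fin: "finite {v :: 'p::finite pval. \<forall>p. lb p \<le> v p \<and> v p \<le> ub p}"
proof -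
  define m where "m = Min (range lb)"
  define m' where "m' = Max (range ub)"
  have "{v :: 'p pval. \<forall>p. lb p \<le> v p \<and> v p \<le> ub p} \<subseteq>
      {f. \<forall>x. (x \<in> UNIV \<longrightarrow> f x \<in> {m..m'}) \<and> (x \<notin> UNIV \<longrightarrow> f x = 0)}"
  proof (clarsimp)
    fix v :: "'p pval" and x assume h: "\<forall>p. lb p \<le> v p \<and> v p \<le> ub p"
    have "m \<le> lb x" unfolding m_def by (rule Min_le) auto
    moreover have "ub x \<le> m'" unfolding m'_def by (rule Max_ge) auto
    ultimately show "m \<le> v x \<and> v x \<le> m'" using h[rule_format, of x] by simp
  qed
  moreover have "finite {f :: 'p pval. \<forall>x. (x \<in> UNIV \<longrightarrow> f x \<in> {m..m'}) \<and> (x \<notin> UNIV \<longrightarrow> f x = 0)}"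
    by (rule finite_set_of_finite_funs) auto
  ultimately show ?thesis by (rule finite_subset)
qed

lemma fin_abs:
  assumes wf: "wf_ptba A"
  shows "finite_abstraction A lb ub (alpha_pk A lb ub)"
proof -
  let ?n = "nclk (fst A)" and ?M = "Mx A lb ub"
  define Box where "Box = {v :: 'b pval. \<forall>p. lb p \<le> v p \<and> v p \<le> ub p}"
  define K where "K = Max ((\<lambda>i. \<bar>?M i\<bar>) ` {0..?n})"
  have K: "i \<le> ?n \<Longrightarrow> \<bar>?M i\<bar> \<le> K" for i unfolding K_def by (rule Max_ge) auto
  define Vals where "Vals = insert EInf ((\<lambda>(c, s). EFin c s) ` ({-K..K} \<times> UNIV))"
  define FG where "FG = {f :: 'b pval \<times> nat \<times> nat \<Rightarrow> eb. \<forall>x. (x \<in> Box \<times> {0..?n} \<times> {0..?n} \<longrightarrow> f x \<in> Vals) \<and>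
       (x \<notin> Box \<times> {0..?n} \<times> {0..?n} \<longrightarrow> f x = EInf)}"
  have finBox: "finite Box" unfolding Box_def by (rule box_fin)
  have finVals: "finite Vals" unfolding Vals_def by simp
  have finFG: "finite FG" unfolding FG_def using finBox finVals by (intro finite_set_of_finite_funs) auto
  have finL: "finite (locs (fst A))" using wf by (auto simp: wf_ptba_def Let_def)
  have sub: "sem_state ?n ` (\<Union>S \<in> sym_reach A lb ub. alpha_pk A lb ub S) \<subseteq>
      (\<lambda>(l, V, G). (l, ZZ ?n V G)) ` (locs (fst A) \<times> Pow Box \<times> FG)"
  proof
    fix x assume "x \<in> sem_state ?n ` (\<Union>S \<in> sym_reach A lb ub. alpha_pk A lb ub S)"
    then obtain S S2 where S: "S \<in> sym_reach A lb ub" "S2 \<in> alpha_pk A lb ub S" "x = sem_state ?n S2" by auto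
    obtain l C D where s1: "S = (l, C, D)" by (cases S) auto
    obtain l' C' D' where s2: "S2 = (l', C', D')" by (cases S2) auto
    have ll: "l' = l" and pk: "pk_ok A lb ub (C, D) (C', D')" using S(2) by (auto simp: s1 s2 alpha_pk_def)
    have W: "Wst A lb ub (l, C, D)" using reach_inv[OF wf S(1)[unfolded s1]] by simp
    then have lL: "l \<in> locs (fst A)" and C0C: "C0 lb ub \<subseteq> C" by (auto simp: Wst_def)
    have CC: "C \<subseteq> C'" using pk unfolding pk_ok_def Let_def by auto
    have VB: "csem C' \<subseteq> Box"
    proof
      fix v assume "v \<in> csem C'"
      then have "v \<in> csem (C0 lb ub)" using csem_mono[OF CC] csem_mono[OF C0C] by blast
      then show "v \<in> Box" using box by (auto simp: Box_def)
    qed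
    define G where "G = (\<lambda>(v, i, j). if v \<in> csem C' \<and> i \<le> ?n \<and> j \<le> ?n then evd v D' i j else EInf)"
    have GFG: "G \<in> FG"
      unfolding FG_def
    proof (intro CollectI allI conjI impI)
      fix y :: "'b pval \<times> nat \<times> nat"
      obtain v i j where y: "y = (v, i, j)" by (cases y) auto
      show "y \<notin> Box \<times> {0..?n} \<times> {0..?n} \<Longrightarrow> G y = EInf" using VB by (auto simp: G_def y)
      show "G y \<in> Vals" if "y \<in> Box \<times> {0..?n} \<times> {0..?n}"
      proof (cases "v \<in> csem C'")
        case False then show ?thesis by (simp add: G_def y Vals_def)
      next
        case True
        have ij: "i \<le> ?n" "j \<le> ?n" using that y by auto
        have e: "ent_ok (?M i) (?M j) (evd v D i j) (evd v D' i j)" using pk_entry(2)[OF pk True ij] .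
        have Ki: "\<bar>?M i\<bar> \<le> K" "\<bar>?M j\<bar> \<le> K" using K ij by auto
        have "evd v D' i j \<in> Vals"
          using e Ki unfolding ent_ok_def Vals_def by (auto simp: image_iff abs_le_iff)
        then show ?thesis using True ij by (simp add: G_def y)
      qed
    qed
    have "x = (l, ZZ ?n (csem C') G)" using S(3) ll by (simp add: s2 sem_state_def zone_ZZ G_def)
    then show "x \<in> (\<lambda>(l, V, G). (l, ZZ ?n V G)) ` (locs (fst A) \<times> Pow Box \<times> FG)"
      using lL VB GFG by force
  qed
  have "finite ((\<lambda>(l, V, G). (l, ZZ ?n V G)) ` (locs (fst A) \<times> Pow Box \<times> FG))"
    using finL finBox finFG by simp
  then show ?thesis unfolding finite_abstraction_def using sub finite_subset by blast
qed

theorem lemma2: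
  fixes A :: "('l, 'p::finite) ptba" and lb ub :: "'p \<Rightarrow> int"
  assumes "wf_ptba A"
  shows "is_abstraction A lb ub (alpha_pk A lb ub) \<and> finite_abstraction A lb ub (alpha_pk A lb ub)"
  using is_abs[OF assms] fin_abs[OF assms] by simp

end
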